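(* (1) If $\iota$ is an involution of odd type with patching element $\gamma$, then $\mathcal H\cap\Omega^+_{\mathbb K_\gamma}\neq\emptyset$. (2) If $\iota$ is an involution of even type with patching element $\gamma$, then $\mathcal H\cap\Omega^+_{\mathbb K_\gamma}=\emptyset$.
   Context: $\Lambda=\mathbb U(2)\oplus\mathbb U\oplus\mathbb E_8(2)$; $\Omega_\Lambda^+$ a fixed component of $\{[\omega]\in\mathbf P(\Lambda\otimes\mathbb C):\omega^2=0,\langle\omega,\bar\omega\rangle>0\}$; for $d\in\Lambda\otimes\mathbb R$, $H_d=\{\omega\in\Omega_\Lambda^+:\langle\omega,d\rangle=0\}$; $\mathcal H=\bigcup_{d\in\Lambda,d^2=-2}H_d$. Setting: $\iota$ is a fixed-point-free involution of $K_{\tau,\tau'}=\mathrm{Km}(E_\tau\times E_{\tau'})$ with $\mathbf K\subset H^2(K_{\tau,\tau'},\mathbb Z)_-$ ($\mathbf K\cong\mathbb U(2)\oplus\mathbb U(2)$ the image of $H^1(E_\tau,\mathbb Z)\otimes H^1(E_{\tau'},\mathbb Z)$), $\alpha$ a marking with $\alpha(H^2_-)=\Lambda$ and period in $\Omega_\Lambda^+$, $\mathbb K_\gamma=\alpha(\mathbf K)$, $\mathbb E_\gamma$ the orthogonal complement of $\mathbb K_\gamma$ in $\Lambda$ ($\cong\mathbb E_8(2)$), and $\Omega^+_{\mathbb K_\gamma}=\{[\omega]\in\Omega^+_\Lambda:\omega\in\mathbb K_\gamma\otimes\mathbb C\}$. Writing $\Lambda=\mathbb Z(d_1+d_2)+\mathbb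 K_\gamma\oplus\mathbb E_\gamma$ with $d_1\in\mathbb K_\gamma^\vee\setminus\mathbb K_\gamma$, $d_2\in\mathbb E_\gamma^\vee\setminus\mathbb E_\gamma$, the patching element is $\gamma=\bar d_1\in A_{\mathbf K}$, and $\iota$ is of odd (resp. even) type if $q_{\mathbf K}(\gamma)=1$ (resp. $0$) in $\mathbb Z/2$. *)

theory Defs
  imports "HOL-Analysis.Analysis"
begin

text \<open>Signature convention: Lambda has signature (2,10), so E8(2) is the NEGATIVE definite
 E8 root lattice with form scaled by 2 (Gram = 2 * (minus Cartan matrix)).
 E8 Dynkin diagram (Bourbaki labels 1..8 shifted to 0..7): edges 0-2, 2-3, 3-4, 4-5, 5-6, 6-7, 1-3.\<close>

definition E8_edge :: "nat \<Rightarrow> nat \<Rightarrow> bool" where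
  "E8_edge i j = ({i, j} \<in> {{0,2},{2,3},{3,4},{4,5},{5,6},{6,7},{1,3}})"

definition E8m2_gram :: "nat \<Rightarrow> nat \<Rightarrow> int" where
  "E8m2_gram i j = (if i = j then -4 else if E8_edge i j then 2 else 0)"

definition U_gram :: "nat \<Rightarrow> nat \<Rightarrow> int" where
  "U_gram i j = (if i \<noteq> j then 1 else 0)"   \<comment> \<open>for i, j < 2\<close>

definition Lam_gram :: "nat \<Rightarrow> nat \<Rightarrow> int" where
  "Lam_gram i j =
     (if i < 2 \<and> j < 2 then 2 * U_gram i j
      else if 2 \<le> i \<and> i < 4 \<and> 2 \<le> j \<and> j < 4 then U_gram (i - 2) (j - 2)
      else if 4 \<le> i \<and> i < 12 \<and> 4 \<le> j \<and> j < 12 then E8m2_gram (i - 4) (j - 4)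
      else 0)"

definition U2U2_gram :: "nat \<Rightarrow> nat \<Rightarrow> int" where
  "U2U2_gram i j = (if {i, j} = {0, 1} \<or> {i, j} = {2, 3} then 2 else 0)"

text \<open>Bilinear extension of the form of Lambda to coefficients in any commutative ring
 (vectors are functions nat => 'a, only coordinates 0..11 matter).\<close>
definition bil :: "(nat \<Rightarrow> 'a::comm_ring_1) \<Rightarrow> (nat \<Rightarrow> 'a) \<Rightarrow> 'a" where
  "bil x y = (\<Sum>i<12. \<Sum>j<12. x i * of_int (Lam_gram i j) * y j)"

definition Lam :: "(nat \<Rightarrow> int) set" where
  "Lam = {x. \<forall>i\<ge>12. x i = 0}"

definition ofv :: "(nat \<Rightarrow> int) \<Rightarrow> (nat \<Rightarrow> 'a::ring_1)" where
  "ofv x = (\<lambda>t. of_int (x t))"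

definition span_coef :: "nat \<Rightarrow> (nat \<Rightarrow> nat \<Rightarrow> int) \<Rightarrow> (nat \<Rightarrow> 'a::ring_1) set" where
  "span_coef n b = {x. \<exists>c. x = (\<lambda>t. \<Sum>i<n. c i * of_int (b i t))}"

definition zspan :: "nat \<Rightarrow> (nat \<Rightarrow> nat \<Rightarrow> int) \<Rightarrow> (nat \<Rightarrow> int) set" where
  "zspan n b = span_coef n b"

definition orth_compl :: "(nat \<Rightarrow> int) set \<Rightarrow> (nat \<Rightarrow> int) set" where
  "orth_compl S = {x \<in> Lam. \<forall>y\<in>S. bil x y = 0}"

text \<open>The patching data: K_gamma = zspan 4 k with Gram U(2)+U(2); E_gamma = its orthogonal
 complement in Lambda, = zspan 8 e with Gram E8(2); d1 in K^dual minus K,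
 d2 in E^dual minus E (rational vectors in Lambda tensor Q), and
 Lambda = Z(d1+d2) + K_gamma + E_gamma.\<close>
definition patching_setup ::
  "(nat \<Rightarrow> nat \<Rightarrow> int) \<Rightarrow> (nat \<Rightarrow> nat \<Rightarrow> int) \<Rightarrow> (nat \<Rightarrow> rat) \<Rightarrow> (nat \<Rightarrow> rat) \<Rightarrow> bool" where
  "patching_setup k e d1 d2 \<longleftrightarrow>
     (\<forall>i<4. k i \<in> Lam) \<and> (\<forall>i<4. \<forall>j<4. bil (k i) (k j) = U2U2_gram i j) \<and>
     (\<forall>i<8. e i \<in> Lam) \<and> (\<forall>i<8. \<forall>j<8. bil (e i) (e j) = E8m2_gram i j) \<and>
     orth_compl (zspan 4 k) = zspan 8 e \<and>
     d1 \<in> span_coef 4 k \<and> (\<forall>y\<in>zspan 4 k. bil d1 (ofv y) \<in> \<int>) \<and> d1 \<notin> ofv ` zspan 4 k \<and>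
     d2 \<in> span_coef 8 e \<and> (\<forall>y\<in>zspan 8 e. bil d2 (ofv y) \<in> \<int>) \<and> d2 \<notin> ofv ` zspan 8 e \<and>
     ofv ` Lam = {(\<lambda>t. of_int n * (d1 t + d2 t) + of_int (y t) + of_int (z t)) | n y z.
                   y \<in> zspan 4 k \<and> z \<in> zspan 8 e}"

text \<open>q_K(gamma) = d1^2 mod 2Z: odd type iff it is 1 in Z/2, even type iff it is 0.\<close>
definition odd_type :: "(nat \<Rightarrow> rat) \<Rightarrow> bool" where
  "odd_type d1 \<longleftrightarrow> (\<exists>m::int. bil d1 d1 = of_int (2 * m + 1))"

definition even_type :: "(nat \<Rightarrow> rat) \<Rightarrow> bool" where
  "even_type d1 \<longleftrightarrow> (\<exists>m::int. bil d1 d1 = of_int (2 * m))"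

section \<open>Period domain (affine cone over Omega_Lambda), K-part, and the hyperplanes H_d\<close>

definition Omega_cone :: "(nat \<Rightarrow> complex) set" where
  "Omega_cone = {w. (\<forall>i\<ge>12. w i = 0) \<and> bil w w = 0 \<and> 0 < Re (bil w (\<lambda>t. cnj (w t)))}"

definition Omega_Kpart :: "(nat \<Rightarrow> nat \<Rightarrow> int) \<Rightarrow> (nat \<Rightarrow> complex) set" where
  "Omega_Kpart k = span_coef 4 k"

definition Hyp_union :: "(nat \<Rightarrow> complex) set" where
  "Hyp_union = {w. \<exists>d\<in>Lam. bil d d = -2 \<and> bil w (ofv d) = 0}"

end

theory Submission
  imports Defs
begin

lemma bil_expand:
  "bil x y = 2*(x 0 * y 1 + x 1 * y 0) + (x 2 * y 3 + x 3 * y 2)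
    + (-4) * (x 4 * y 4 + x 5 * y 5 + x 6 * y 6 + x 7 * y 7 + x 8 * y 8 + x 9 * y 9 + x 10 * y 10 + x 11 * y 11)
    + 2 * (x 4 * y 6 + x 6 * y 4 + x 6 * y 7 + x 7 * y 6 + x 7 * y 8 + x 8 * y 7 + x 8 * y 9 + x 9 * y 8
         + x 9 * y 10 + x 10 * y 9 + x 10 * y 11 + x 11 * y 10 + x 5 * y 7 + x 7 * y 5)"
  by (simp add: bil_def Lam_gram_def U_gram_def E8m2_gram_def E8_edge_def eval_nat_numeral
       insert_commute doubleton_eq_iff algebra_simps)

lemma bil_sym: "bil x y = bil y x"
  by (simp add: bil_expand algebra_simps)

lemma bil_lin_left: "bil (\<lambda>t. a * x t + b * y t) z = a * bil x z + b * bil y z"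
  by (simp add: bil_expand algebra_simps)

lemma bil_add_left: "bil (\<lambda>t. x t + y t) z = bil x z + bil y z"
  by (simp add: bil_expand algebra_simps)
lemma bil_add_right: "bil z (\<lambda>t. x t + y t) = bil z x + bil z y"
  by (simp add: bil_expand algebra_simps)
lemma bil_diff_left: "bil (\<lambda>t. x t - y t) z = bil x z - bil y z"
  by (simp add: bil_expand algebra_simps)
lemma bil_diff_right: "bil z (\<lambda>t. x t - y t) = bil z x - bil z y"
  by (simp add: bil_expand algebra_simps)
lemma bil_scale_left: "bil (\<lambda>t. a * x t) z = a * bil x z"
  by (simp add: bil_expand algebra_simps)
lemma bil_scale_right: "bil z (\<lambda>t. a * x t) = a * bil z x"
  by (simp add: bil_expand algebra_simps)
lemma bil_zero_left: "bil (\<lambda>t. 0) z = 0"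
  by (simp add: bil_expand)

lemma bil_of_int: "bil (\<lambda>t. of_int (x t)) (\<lambda>t. of_int (y t)) = of_int (bil x y)"
  by (simp add: bil_expand)
lemma bil_of_rat: "bil (\<lambda>t. (of_rat (x t) :: 'a::field_char_0)) (\<lambda>t. of_rat (y t)) = of_rat (bil x y)"
  by (simp add: bil_expand of_rat_add of_rat_mult of_rat_minus of_rat_diff)
lemma bil_of_real: "bil (\<lambda>t. (of_real (x t) :: complex)) (\<lambda>t. of_real (y t)) = of_real (bil x y)"
  by (simp add: bil_expand)


lemma bil_complex:
  "bil (\<lambda>t. complex_of_real (U t) + \<i> * complex_of_real (V t)) (\<lambda>t. complex_of_real (U' t) + \<i> * complex_of_real (V' t))
   = complex_of_real (bil U U' - bil V V') + \<i> * complex_of_real (bil U V' + bil V U')"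
  apply (simp only: bil_add_left bil_add_right bil_scale_left bil_scale_right bil_of_real)
  apply (simp add: algebra_simps)
  done

lemma bil_zero_right: "bil z (\<lambda>t. 0) = 0"
  by (simp add: bil_expand)

lemma bil_sum_left: "bil (\<lambda>t. \<Sum>i<(n::nat). f i t) y = (\<Sum>i<n. bil (f i) y)"
  by (induction n) (simp_all add: bil_add_left bil_zero_left)

lemma bil_sum_right: "bil y (\<lambda>t. \<Sum>i<(n::nat). f i t) = (\<Sum>i<n. bil y (f i))"
  by (induction n) (simp_all add: bil_add_right bil_zero_right)

lemma bil_lc:
  "bil (\<lambda>t. \<Sum>i<(n::nat). c i * of_int (b i t)) (\<lambda>t. \<Sum>j<(m::nat). c' j * of_int (b' j t))
   = (\<Sum>i<n. \<Sum>j<m. c i * c' j * of_int (bil (b i) (b' j)))"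
  apply (subst bil_sum_left)
  apply (subst bil_sum_right)
  apply (simp only: bil_scale_left bil_scale_right bil_of_int)
  apply (simp add: mult_ac)
  done

definition QE :: "(nat \<Rightarrow> 'a::comm_ring_1) \<Rightarrow> 'a" where
  "QE m = m 0 * m 0 + m 1 * m 1 + m 2 * m 2 + m 3 * m 3 + m 4 * m 4 + m 5 * m 5 + m 6 * m 6 + m 7 * m 7
     - (m 0 * m 2 + m 2 * m 3 + m 3 * m 4 + m 4 * m 5 + m 5 * m 6 + m 6 * m 7 + m 1 * m 3)"

definition wtree :: "int \<Rightarrow> int \<Rightarrow> int \<Rightarrow> int \<Rightarrow> int \<Rightarrow> int \<Rightarrow> int \<Rightarrow> int \<Rightarrow> int list" where
  "wtree p0 p1 p2 p3 p4 p5 p6 p7 = (if p0 = 0 then (if p1 = 0 then (if p2 = 0 then (if p3 = 0 then (if p4 = 0 then (if p5 = 0 then (if p6 = 0 then (if p7 = 0 then [0, 0, 0, 0, 0, 0, 0, 0] else [0, 0, 0, 0, 0, 0, 0, 1]) else (if p7 = 0 then [0, 0, 0, 0, 0, 0, 1, 0] else [0, 0, 0, 0, 0, 0, 1, 1])) else (if p6 = 0 then (if p7 = 0 then [0, 0, 0, 0, 0, 1, 0, 0] else [0, 0, 0, 0, 0, 0, 0, 0]) else (if p7 = 0 then [0, 0, 0, 0, 0, 1, 1, 0] else [0, 0, 0, 0, 0, 1, 1, 1]))) else (if p5 = 0 then (if p6 = 0 then (if p7 = 0 then [0, 0, 0, 0, 1, 0, 0, 0] else [0, 0, 0, 0, 0,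 0, 0, 0]) else (if p7 = 0 then [0, 0, 0, 0, 0, 0, 0, 0] else [0, 0, 0, 0, 0, 0, 0, 0])) else (if p6 = 0 then (if p7 = 0 then [0, 0, 0, 0, 1, 1, 0, 0] else [0, 0, 0, 0, 0, 0, 0, 0]) else (if p7 = 0 then [0, 0, 0, 0, 1, 1, 1, 0] else [0, 0, 0, 0, 1, 1, 1, 1])))) else (if p4 = 0 then (if p5 = 0 then (if p6 = 0 then (if p7 = 0 then [0, 0, 0, 1, 0, 0, 0, 0] else [0, 0, 0, 0, 0, 0, 0, 0]) else (if p7 = 0 then [0, 0, 0, 0, 0, 0, 0, 0] else [0, 0, 0, 0, 0, 0, 0, 0])) else (if p6 = 0 then (if p7 = 0 then [0, 0, 0, 0, 0, 0, 0, 0] else [2, 2, 4, 5, 4, 3, 2, 1]) else (if p7 = 0 then [0, 0, 0, 0, 0, 0, 0, 0] else [0, 0, 0, 0, 0, 0, 0, 0]))) else (if p5 = 0 then (if p6 = 0 then (if p7 = 0 then [0, 0, 0, 1, 1, 0, 0, 0] else [0, 0, 0, 0, 0, 0, 0, 0]) else (if p7 = 0 then [0, 0, 0, 0, 0, 0, 0, 0] else [0, 0, 0, 0, 0, 0, 0, 0])) else (if p6 = 0 then (if p7 = 0 then [0, 0, 0, 1, 1, 1, 0, 0] else [0, 0, 0, 0, 0, 0, 0, 0]) else (if p7 = 0 then [0, 0, 0, 1, 1, 1, 1, 0] else [0, 0, 0, 1, 1, 1, 1, 1]))))) else (if p3 = 0 then (if p4 = 0 then (if p5 = 0 then (if p6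 = 0 then (if p7 = 0 then [0, 0, 1, 0, 0, 0, 0, 0] else [0, 0, 0, 0, 0, 0, 0, 0]) else (if p7 = 0 then [0, 0, 0, 0, 0, 0, 0, 0] else [0, 0, 0, 0, 0, 0, 0, 0])) else (if p6 = 0 then (if p7 = 0 then [0, 0, 0, 0, 0, 0, 0, 0] else [2, 2, 3, 4, 4, 3, 2, 1]) else (if p7 = 0 then [0, 0, 0, 0, 0, 0, 0, 0] else [0, 0, 0, 0, 0, 0, 0, 0]))) else (if p5 = 0 then (if p6 = 0 then (if p7 = 0 then [0, 0, 0, 0, 0, 0, 0, 0] else [2, 2, 3, 4, 3, 2, 2, 1]) else (if p7 = 0 then [2, 2, 3, 4, 3, 2, 1, 0] else [2, 2, 3, 4, 3, 2, 1, 1])) else (if p6 = 0 then (if p7 = 0 then [0, 0, 0, 0, 0, 0, 0, 0] else [2, 2, 3, 4, 3, 3, 2, 1]) else (if p7 = 0 then [0, 0, 0, 0, 0, 0, 0, 0] else [0, 0, 0, 0, 0, 0, 0, 0])))) else (if p4 = 0 then (if p5 = 0 then (if p6 = 0 then (if p7 = 0 then [0, 0, 1, 1, 0, 0, 0, 0] else [0, 0, 0, 0, 0, 0, 0, 0]) else (if p7 = 0 then [0, 0, 0, 0, 0, 0, 0, 0] else [0, 0, 0, 0, 0, 0, 0, 0])) else (if p6 = 0 then (if p7 = 0 then [0, 0, 0, 0, 0, 0, 0, 0] else [2, 2, 3, 5, 4, 3, 2, 1]) else (if p7 = 0 then [0, 0, 0, 0, 0, 0, 0, 0] else [0, 0,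 0, 0, 0, 0, 0, 0]))) else (if p5 = 0 then (if p6 = 0 then (if p7 = 0 then [0, 0, 1, 1, 1, 0, 0, 0] else [0, 0, 0, 0, 0, 0, 0, 0]) else (if p7 = 0 then [0, 0, 0, 0, 0, 0, 0, 0] else [0, 0, 0, 0, 0, 0, 0, 0])) else (if p6 = 0 then (if p7 = 0 then [0, 0, 1, 1, 1, 1, 0, 0] else [0, 0, 0, 0, 0, 0, 0, 0]) else (if p7 = 0 then [0, 0, 1, 1, 1, 1, 1, 0] else [0, 0, 1, 1, 1, 1, 1, 1])))))) else (if p2 = 0 then (if p3 = 0 then (if p4 = 0 then (if p5 = 0 then (if p6 = 0 then (if p7 = 0 then [0, 1, 0, 0, 0, 0, 0, 0] else [0, 0, 0, 0, 0, 0, 0, 0]) else (if p7 = 0 then [0, 0, 0, 0, 0, 0, 0, 0] else [0, 0, 0, 0, 0, 0, 0, 0])) else (if p6 = 0 then (if p7 = 0 then [0, 0, 0, 0, 0, 0, 0, 0] else [2, 3, 4, 6, 4, 3, 2, 1]) else (if p7 = 0 then [0, 0, 0, 0, 0, 0, 0, 0] else [0, 0, 0, 0, 0, 0, 0, 0]))) else (if p5 = 0 then (if p6 = 0 then (if p7 = 0 then [0, 0, 0, 0, 0, 0, 0, 0] else [2, 3, 4, 6, 5, 4, 2, 1]) else (if p7 = 0 then [2, 3, 4, 6, 5, 4, 3, 2] else [2, 3, 4, 6, 5, 4, 3, 1])) else (if p6 = 0 then (if p7 = 0 then [0, 0, 0, 0, 0, 0, 0, 0] else [2, 3, 4, 6,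 5, 3, 2, 1]) else (if p7 = 0 then [0, 0, 0, 0, 0, 0, 0, 0] else [0, 0, 0, 0, 0, 0, 0, 0])))) else (if p4 = 0 then (if p5 = 0 then (if p6 = 0 then (if p7 = 0 then [0, 1, 0, 1, 0, 0, 0, 0] else [0, 0, 0, 0, 0, 0, 0, 0]) else (if p7 = 0 then [0, 0, 0, 0, 0, 0, 0, 0] else [0, 0, 0, 0, 0, 0, 0, 0])) else (if p6 = 0 then (if p7 = 0 then [0, 0, 0, 0, 0, 0, 0, 0] else [2, 3, 4, 5, 4, 3, 2, 1]) else (if p7 = 0 then [0, 0, 0, 0, 0, 0, 0, 0] else [0, 0, 0, 0, 0, 0, 0, 0]))) else (if p5 = 0 then (if p6 = 0 then (if p7 = 0 then [0, 1, 0, 1, 1, 0, 0, 0] else [0, 0, 0, 0, 0, 0, 0, 0]) else (if p7 = 0 then [0, 0, 0, 0, 0, 0, 0, 0] else [0, 0, 0, 0, 0, 0, 0, 0])) else (if p6 = 0 then (if p7 = 0 then [0, 1, 0, 1, 1, 1, 0, 0] else [0, 0, 0, 0, 0, 0, 0, 0]) else (if p7 = 0 then [0, 1, 0, 1, 1, 1, 1, 0] else [0, 1, 0, 1, 1, 1, 1, 1]))))) else (if p3 = 0 then (if p4 = 0 then (if p5 = 0 then (if p6 = 0 then (if p7 = 0 then [0, 0, 0, 0, 0, 0, 0, 0] else [0, 1, 1, 2, 2, 2, 2, 1]) else (if p7 = 0 then [0, 1, 1, 2, 2, 2, 1, 0] else [0, 1, 1, 2, 2, 2, 1, 1])) else (if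 p6 = 0 then (if p7 = 0 then [0, 1, 1, 2, 2, 1, 0, 0] else [0, 0, 0, 0, 0, 0, 0, 0]) else (if p7 = 0 then [0, 1, 1, 2, 2, 1, 1, 0] else [0, 1, 1, 2, 2, 1, 1, 1]))) else (if p5 = 0 then (if p6 = 0 then (if p7 = 0 then [0, 1, 1, 2, 1, 0, 0, 0] else [0, 0, 0, 0, 0, 0, 0, 0]) else (if p7 = 0 then [0, 0, 0, 0, 0, 0, 0, 0] else [0, 0, 0, 0, 0, 0, 0, 0])) else (if p6 = 0 then (if p7 = 0 then [0, 1, 1, 2, 1, 1, 0, 0] else [0, 0, 0, 0, 0, 0, 0, 0]) else (if p7 = 0 then [0, 1, 1, 2, 1, 1, 1, 0] else [0, 1, 1, 2, 1, 1, 1, 1])))) else (if p4 = 0 then (if p5 = 0 then (if p6 = 0 then (if p7 = 0 then [0, 1, 1, 1, 0, 0, 0, 0] else [0, 0, 0, 0, 0, 0, 0, 0]) else (if p7 = 0 then [0, 0, 0, 0, 0, 0, 0, 0] else [0, 0, 0, 0, 0, 0, 0, 0])) else (if p6 = 0 then (if p7 = 0 then [0, 0, 0, 0, 0, 0, 0, 0] else [2, 3, 3, 5, 4, 3, 2, 1]) else (if p7 = 0 then [0, 0, 0, 0, 0, 0, 0, 0] else [0, 0, 0, 0, 0, 0, 0, 0]))) else (if p5 = 0 then (if p6 = 0 then (if p7 = 0 then [0, 1, 1, 1, 1, 0, 0, 0] else [0, 0, 0, 0, 0, 0, 0, 0]) else (if p7 = 0 then [0, 0, 0, 0, 0, 0,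 0, 0] else [0, 0, 0, 0, 0, 0, 0, 0])) else (if p6 = 0 then (if p7 = 0 then [0, 1, 1, 1, 1, 1, 0, 0] else [0, 0, 0, 0, 0, 0, 0, 0]) else (if p7 = 0 then [0, 1, 1, 1, 1, 1, 1, 0] else [0, 1, 1, 1, 1, 1, 1, 1]))))))) else (if p1 = 0 then (if p2 = 0 then (if p3 = 0 then (if p4 = 0 then (if p5 = 0 then (if p6 = 0 then (if p7 = 0 then [1, 0, 0, 0, 0, 0, 0, 0] else [0, 0, 0, 0, 0, 0, 0, 0]) else (if p7 = 0 then [0, 0, 0, 0, 0, 0, 0, 0] else [0, 0, 0, 0, 0, 0, 0, 0])) else (if p6 = 0 then (if p7 = 0 then [0, 0, 0, 0, 0, 0, 0, 0] else [1, 2, 2, 4, 4, 3, 2, 1]) else (if p7 = 0 then [0, 0, 0, 0, 0, 0, 0, 0] else [0, 0, 0, 0, 0, 0, 0, 0]))) else (if p5 = 0 then (if p6 = 0 then (if p7 = 0 then [0, 0, 0, 0, 0, 0, 0, 0] else [1, 2, 2, 4, 3, 2, 2, 1]) else (if p7 = 0 then [1, 2, 2, 4, 3, 2, 1, 0] else [1, 2, 2, 4, 3, 2, 1, 1])) else (if p6 = 0 then (if p7 = 0 then [0, 0, 0, 0, 0, 0, 0, 0] else [1, 2, 2, 4, 3, 3, 2, 1]) else (if p7 = 0 then [0, 0, 0, 0, 0, 0, 0, 0] else [0, 0, 0, 0, 0, 0, 0, 0])))) else (if p4 = 0 then (if p5 = 0 then (if p6 = 0 then (if p7 = 0 then [0,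 0, 0, 0, 0, 0, 0, 0] else [1, 2, 2, 3, 2, 2, 2, 1]) else (if p7 = 0 then [1, 2, 2, 3, 2, 2, 1, 0] else [1, 2, 2, 3, 2, 2, 1, 1])) else (if p6 = 0 then (if p7 = 0 then [1, 2, 2, 3, 2, 1, 0, 0] else [0, 0, 0, 0, 0, 0, 0, 0]) else (if p7 = 0 then [1, 2, 2, 3, 2, 1, 1, 0] else [1, 2, 2, 3, 2, 1, 1, 1]))) else (if p5 = 0 then (if p6 = 0 then (if p7 = 0 then [0, 0, 0, 0, 0, 0, 0, 0] else [1, 2, 2, 3, 3, 2, 2, 1]) else (if p7 = 0 then [1, 2, 2, 3, 3, 2, 1, 0] else [1, 2, 2, 3, 3, 2, 1, 1])) else (if p6 = 0 then (if p7 = 0 then [0, 0, 0, 0, 0, 0, 0, 0] else [1, 2, 2, 3, 3, 3, 2, 1]) else (if p7 = 0 then [0, 0, 0, 0, 0, 0, 0, 0] else [0, 0, 0, 0, 0, 0, 0, 0]))))) else (if p3 = 0 then (if p4 = 0 then (if p5 = 0 then (if p6 = 0 then (if p7 = 0 then [1, 0, 1, 0, 0, 0, 0, 0] else [0, 0, 0, 0, 0, 0, 0, 0]) else (if p7 = 0 then [0, 0, 0, 0, 0, 0, 0, 0] else [0, 0, 0, 0, 0, 0, 0, 0])) else (if p6 = 0 then (if p7 = 0 then [0, 0, 0, 0, 0, 0, 0, 0] else [1, 2, 3, 4, 4, 3, 2, 1]) else (if p7 = 0 then [0, 0, 0, 0, 0, 0, 0, 0] else [0, 0, 0, 0, 0,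 0, 0, 0]))) else (if p5 = 0 then (if p6 = 0 then (if p7 = 0 then [0, 0, 0, 0, 0, 0, 0, 0] else [1, 2, 3, 4, 3, 2, 2, 1]) else (if p7 = 0 then [1, 2, 3, 4, 3, 2, 1, 0] else [1, 2, 3, 4, 3, 2, 1, 1])) else (if p6 = 0 then (if p7 = 0 then [0, 0, 0, 0, 0, 0, 0, 0] else [1, 2, 3, 4, 3, 3, 2, 1]) else (if p7 = 0 then [0, 0, 0, 0, 0, 0, 0, 0] else [0, 0, 0, 0, 0, 0, 0, 0])))) else (if p4 = 0 then (if p5 = 0 then (if p6 = 0 then (if p7 = 0 then [1, 0, 1, 1, 0, 0, 0, 0] else [0, 0, 0, 0, 0, 0, 0, 0]) else (if p7 = 0 then [0, 0, 0, 0, 0, 0, 0, 0] else [0, 0, 0, 0, 0, 0, 0, 0])) else (if p6 = 0 then (if p7 = 0 then [0, 0, 0, 0, 0, 0, 0, 0] else [1, 2, 3, 5, 4, 3, 2, 1]) else (if p7 = 0 then [0, 0, 0, 0, 0, 0, 0, 0] else [0, 0, 0, 0, 0, 0, 0, 0]))) else (if p5 = 0 then (if p6 = 0 then (if p7 = 0 then [1, 0, 1, 1, 1, 0, 0, 0] else [0, 0, 0, 0, 0, 0, 0, 0]) else (if p7 = 0 then [0, 0, 0, 0, 0, 0, 0, 0] else [0, 0, 0, 0, 0, 0, 0, 0])) else (if p6 = 0 then (if p7 = 0 then [1, 0, 1, 1, 1, 1, 0, 0] else [0, 0, 0, 0, 0, 0, 0, 0]) else (if p7 = 0 then [1, 0,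 1, 1, 1, 1, 1, 0] else [1, 0, 1, 1, 1, 1, 1, 1])))))) else (if p2 = 0 then (if p3 = 0 then (if p4 = 0 then (if p5 = 0 then (if p6 = 0 then (if p7 = 0 then [0, 0, 0, 0, 0, 0, 0, 0] else [1, 1, 2, 2, 2, 2, 2, 1]) else (if p7 = 0 then [1, 1, 2, 2, 2, 2, 1, 0] else [1, 1, 2, 2, 2, 2, 1, 1])) else (if p6 = 0 then (if p7 = 0 then [1, 1, 2, 2, 2, 1, 0, 0] else [0, 0, 0, 0, 0, 0, 0, 0]) else (if p7 = 0 then [1, 1, 2, 2, 2, 1, 1, 0] else [1, 1, 2, 2, 2, 1, 1, 1]))) else (if p5 = 0 then (if p6 = 0 then (if p7 = 0 then [1, 1, 2, 2, 1, 0, 0, 0] else [0, 0, 0, 0, 0, 0, 0, 0]) else (if p7 = 0 then [0, 0, 0, 0, 0, 0, 0, 0] else [0, 0, 0, 0, 0, 0, 0, 0])) else (if p6 = 0 then (if p7 = 0 then [1, 1, 2, 2, 1, 1, 0, 0] else [0, 0, 0, 0, 0, 0, 0, 0]) else (if p7 = 0 then [1, 1, 2, 2, 1, 1, 1, 0] else [1, 1, 2, 2, 1, 1, 1, 1])))) else (if p4 = 0 then (if p5 = 0 then (if p6 = 0 then (if p7 = 0 then [0, 0, 0, 0, 0, 0, 0, 0] else [1, 1, 2, 3, 2, 2, 2, 1]) else (if p7 = 0 then [1, 1, 2, 3, 2, 2, 1, 0] else [1, 1, 2, 3, 2, 2, 1, 1])) else (if p6 = 0 then (if p7 = 0 then [1,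 1, 2, 3, 2, 1, 0, 0] else [0, 0, 0, 0, 0, 0, 0, 0]) else (if p7 = 0 then [1, 1, 2, 3, 2, 1, 1, 0] else [1, 1, 2, 3, 2, 1, 1, 1]))) else (if p5 = 0 then (if p6 = 0 then (if p7 = 0 then [0, 0, 0, 0, 0, 0, 0, 0] else [1, 1, 2, 3, 3, 2, 2, 1]) else (if p7 = 0 then [1, 1, 2, 3, 3, 2, 1, 0] else [1, 1, 2, 3, 3, 2, 1, 1])) else (if p6 = 0 then (if p7 = 0 then [0, 0, 0, 0, 0, 0, 0, 0] else [1, 1, 2, 3, 3, 3, 2, 1]) else (if p7 = 0 then [0, 0, 0, 0, 0, 0, 0, 0] else [0, 0, 0, 0, 0, 0, 0, 0]))))) else (if p3 = 0 then (if p4 = 0 then (if p5 = 0 then (if p6 = 0 then (if p7 = 0 then [0, 0, 0, 0, 0, 0, 0, 0] else [1, 1, 1, 2, 2, 2, 2, 1]) else (if p7 = 0 then [1, 1, 1, 2, 2, 2, 1, 0] else [1, 1, 1, 2, 2, 2, 1, 1])) else (if p6 = 0 then (if p7 = 0 then [1, 1, 1, 2, 2, 1, 0, 0] else [0, 0, 0, 0, 0, 0, 0, 0]) else (if p7 = 0 then [1, 1, 1, 2, 2, 1, 1, 0] else [1, 1, 1, 2, 2, 1, 1, 1]))) else (if p5 = 0 then (if p6 = 0 then (if p7 = 0 then [1, 1, 1, 2, 1, 0, 0, 0] else [0, 0, 0, 0, 0, 0, 0, 0]) else (if p7 = 0 then [0, 0, 0, 0, 0, 0, 0, 0] else [0,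 0, 0, 0, 0, 0, 0, 0])) else (if p6 = 0 then (if p7 = 0 then [1, 1, 1, 2, 1, 1, 0, 0] else [0, 0, 0, 0, 0, 0, 0, 0]) else (if p7 = 0 then [1, 1, 1, 2, 1, 1, 1, 0] else [1, 1, 1, 2, 1, 1, 1, 1])))) else (if p4 = 0 then (if p5 = 0 then (if p6 = 0 then (if p7 = 0 then [1, 1, 1, 1, 0, 0, 0, 0] else [0, 0, 0, 0, 0, 0, 0, 0]) else (if p7 = 0 then [0, 0, 0, 0, 0, 0, 0, 0] else [0, 0, 0, 0, 0, 0, 0, 0])) else (if p6 = 0 then (if p7 = 0 then [0, 0, 0, 0, 0, 0, 0, 0] else [1, 3, 3, 5, 4, 3, 2, 1]) else (if p7 = 0 then [0, 0, 0, 0, 0, 0, 0, 0] else [0, 0, 0, 0, 0, 0, 0, 0]))) else (if p5 = 0 then (if p6 = 0 then (if p7 = 0 then [1, 1, 1, 1, 1, 0, 0, 0] else [0, 0, 0, 0, 0, 0, 0, 0]) else (if p7 = 0 then [0, 0, 0, 0, 0, 0, 0, 0] else [0, 0, 0, 0, 0, 0, 0, 0])) else (if p6 = 0 then (if p7 = 0 then [1, 1, 1, 1, 1, 1, 0, 0] else [0, 0, 0, 0, 0, 0, 0, 0]) else (if p7 = 0 then [1, 1, 1, 1, 1, 1, 1, 0] else [1, 1, 1, 1, 1, 1, 1, 1]))))))))"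

lemma wtree_ok:
  assumes "p0 = 0 \<or> p0 = 1" "p1 = 0 \<or> p1 = 1" "p2 = 0 \<or> p2 = 1" "p3 = 0 \<or> p3 = 1"
    "p4 = 0 \<or> p4 = 1" "p5 = 0 \<or> p5 = 1" "p6 = 0 \<or> p6 = 1" "p7 = 0 \<or> p7 = 1"
    "odd (QE (\<lambda>i. [p0,p1,p2,p3,p4,p5,p6,p7] ! i))"
  shows "QE (\<lambda>i. wtree p0 p1 p2 p3 p4 p5 p6 p7 ! i) = 1 \<and>
    (\<forall>i<8. even (wtree p0 p1 p2 p3 p4 p5 p6 p7 ! i - [p0,p1,p2,p3,p4,p5,p6,p7] ! i))"
  using assms
  apply (elim disjE)
  apply (simp_all add: QE_def wtree_def All_less_Suc numeral_eq_Suc)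
  done


lemma QE_shift: "QE (\<lambda>i. p i + 2 * q i) = QE p + 2 * (2 * QE q + 2 * (p 0 * q 0 + p 1 * q 1 + p 2 * q 2 + p 3 * q 3 + p 4 * q 4 + p 5 * q 5 + p 6 * q 6 + p 7 * q 7)
   - (p 0 * q 2 + p 2 * q 0 + p 2 * q 3 + p 3 * q 2 + p 3 * q 4 + p 4 * q 3 + p 4 * q 5 + p 5 * q 4 + p 5 * q 6 + p 6 * q 5 + p 6 * q 7 + p 7 * q 6 + p 1 * q 3 + p 3 * q 1))"
  by (simp add: QE_def algebra_simps)

lemma E8_root_exists:
  fixes m :: "nat \<Rightarrow> int"
  assumes "odd (QE m)"
  shows "\<exists>r. QE r = 1 \<and> (\<forall>i<8. even (r i - m i))"
proof -
  define p where "p = (\<lambda>i. m i mod 2)"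
  define q where "q = (\<lambda>i. m i div 2)"
  have mpq: "m = (\<lambda>i. p i + 2 * q i)" unfolding p_def q_def by (rule ext) simp
  have "QE m = QE p + 2 * (2 * QE q + 2 * (p 0 * q 0 + p 1 * q 1 + p 2 * q 2 + p 3 * q 3 + p 4 * q 4 + p 5 * q 5 + p 6 * q 6 + p 7 * q 7)
   - (p 0 * q 2 + p 2 * q 0 + p 2 * q 3 + p 3 * q 2 + p 3 * q 4 + p 4 * q 3 + p 4 * q 5 + p 5 * q 4 + p 5 * q 6 + p 6 * q 5 + p 6 * q 7 + p 7 * q 6 + p 1 * q 3 + p 3 * q 1))"
    by (subst mpq, rule QE_shift)
  then obtain K where K: "QE m = QE p + 2 * K" by blast
  have oddp: "odd (QE p)" using assms unfolding K by simp
  have p01: "\<And>i. p i = 0 \<or> p i = 1" unfolding p_def by presburger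
  have "QE (\<lambda>i. [p 0, p 1, p 2, p 3, p 4, p 5, p 6, p 7] ! i) = QE p"
    by (simp add: QE_def numeral_eq_Suc)
  hence "odd (QE (\<lambda>i. [p 0, p 1, p 2, p 3, p 4, p 5, p 6, p 7] ! i))" using oddp by simp
  from wtree_ok[OF p01 p01 p01 p01 p01 p01 p01 p01 this]
  obtain r where r1: "QE r = 1" and r2: "\<forall>i<8. even (r i - [p 0, p 1, p 2, p 3, p 4, p 5, p 6, p 7] ! i)"
    by blast
  have "\<forall>i<8. [p 0, p 1, p 2, p 3, p 4, p 5, p 6, p 7] ! i = p i"
    by (simp add: All_less_Suc numeral_eq_Suc)
  hence "\<forall>i<8. even (r i - p i)" using r2 by simp
  moreover have "\<forall>i. even (p i - m i)" unfolding p_def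
    by (metis dvd_minus_iff minus_diff_eq minus_mod_eq_mult_div dvd_triv_left)
  ultimately have "\<forall>i<8. even (r i - m i)"
    by (metis (no_types, lifting) diff_add_cancel even_add)
  with r1 show ?thesis by blast
qed

lemma QE_sos:
  fixes x :: "nat \<Rightarrow> 'a::linordered_field"
  shows "QE x = (x 0 - x 2 / 2)^2 + (x 1 - x 3 / 2)^2 + 3/4 * (x 2 - 2/3 * x 3)^2 + 5/12 * (x 3 - 6/5 * x 4)^2
    + 2/5 * (x 4 - 5/4 * x 5)^2 + 3/8 * (x 5 - 4/3 * x 6)^2 + 1/3 * (x 6 - 3/2 * x 7)^2 + 1/4 * (x 7)^2"
  by (simp add: QE_def power2_eq_square field_simps)

lemma QE_nonneg:
  fixes x :: "nat \<Rightarrow> 'a::linordered_field"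
  shows "QE x \<ge> 0"
  unfolding QE_sos by (intro add_nonneg_nonneg mult_nonneg_nonneg) auto

lemma QE_zero:
  fixes x :: "nat \<Rightarrow> 'a::linordered_field"
  assumes "QE x \<le> 0"
  shows "x 0 = 0 \<and> x 1 = 0 \<and> x 2 = 0 \<and> x 3 = 0 \<and> x 4 = 0 \<and> x 5 = 0 \<and> x 6 = 0 \<and> x 7 = 0"
proof -
  let ?a = "(x 0 - x 2 / 2)^2" and ?b = "(x 1 - x 3 / 2)^2" and ?c = "3/4 * (x 2 - 2/3 * x 3)^2"
  let ?d = "5/12 * (x 3 - 6/5 * x 4)^2" and ?e = "2/5 * (x 4 - 5/4 * x 5)^2" and ?f = "3/8 * (x 5 - 4/3 * x 6)^2"
  let ?g = "1/3 * (x 6 - 3/2 * x 7)^2" and ?h = "1/4 * (x 7)^2"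
  have nn: "?a \<ge> 0" "?b \<ge> 0" "?c \<ge> 0" "?d \<ge> 0" "?e \<ge> 0" "?f \<ge> 0" "?g \<ge> 0" "?h \<ge> 0" by auto
  have "?a + ?b + ?c + ?d + ?e + ?f + ?g + ?h \<le> 0" using assms unfolding QE_sos .
  hence z: "?a = 0" "?b = 0" "?c = 0" "?d = 0" "?e = 0" "?f = 0" "?g = 0" "?h = 0" using nn by linarith+
  from z(8) have 7: "x 7 = 0" by simp
  from z(7) 7 have 6: "x 6 = 0" by simp
  from z(6) 6 have 5: "x 5 = 0" by simp
  from z(5) 5 have 4: "x 4 = 0" by simp
  from z(4) 4 have 3: "x 3 = 0" by simp
  from z(3) 3 have 2: "x 2 = 0" by simp
  from z(2) 3 have 1: "x 1 = 0" by simp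
  from z(1) 2 have 0: "x 0 = 0" by simp
  show ?thesis using 0 1 2 3 4 5 6 7 by simp
qed

definition B4 :: "(nat \<Rightarrow> 'a::comm_ring_1) \<Rightarrow> (nat \<Rightarrow> 'a) \<Rightarrow> 'a" where
  "B4 s t = 2 * (s 0 * t 1 + s 1 * t 0 + s 2 * t 3 + s 3 * t 2)"

lemma Kchoice:
  fixes a :: "nat \<Rightarrow> int"
  assumes "odd (a 0 * a 1 + a 2 * a 3)"
  shows "\<exists>A s t :: nat \<Rightarrow> int. (\<forall>i<4. even (A i - a i)) \<and> A 0 * A 1 + A 2 * A 3 = -1 \<and>
     B4 s s = 4 \<and> B4 t t = 4 \<and> B4 s t = 0 \<and> B4 s A = 0 \<and> B4 t A = 0"
proof (cases "odd (a 0) \<and> odd (a 1)")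
  case True
  hence "even (a 2 * a 3)" using assms by auto
  hence "even (a 2) \<or> even (a 3)" by auto
  moreover
  { assume h: "even (a 2)" "even (a 3)"
    have ?thesis
      apply (rule exI[of _ "\<lambda>i. [1,-1,0,0] ! i"], rule exI[of _ "\<lambda>i. [1,1,0,0] ! i"], rule exI[of _ "\<lambda>i. [0,0,1,1] ! i"])
      using True h by (simp add: B4_def All_less_Suc numeral_eq_Suc) }
  moreover
  { assume h: "even (a 2)" "odd (a 3)"
    have ?thesis
      apply (rule exI[of _ "\<lambda>i. [1,-1,0,1] ! i"], rule exI[of _ "\<lambda>i. [1,1,0,0] ! i"], rule exI[of _ "\<lambda>i. [1,-1,2,1] ! i"])
      using True h by (simp add: B4_def All_less_Suc numeral_eq_Suc) }
  moreover
  { assume h: "odd (a 2)" "even (a 3)"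
    have ?thesis
      apply (rule exI[of _ "\<lambda>i. [1,-1,1,0] ! i"], rule exI[of _ "\<lambda>i. [1,1,0,0] ! i"], rule exI[of _ "\<lambda>i. [1,-1,1,2] ! i"])
      using True h by (simp add: B4_def All_less_Suc numeral_eq_Suc) }
  ultimately show ?thesis by blast
next
  case False
  hence "even (a 0 * a 1)" by auto
  hence o: "odd (a 2) \<and> odd (a 3)" using assms by auto
  have "even (a 0) \<or> even (a 1)" using False by auto
  moreover
  { assume h: "even (a 0)" "even (a 1)"
    have ?thesis
      apply (rule exI[of _ "\<lambda>i. [0,0,1,-1] ! i"], rule exI[of _ "\<lambda>i. [0,0,1,1] ! i"], rule exI[of _ "\<lambda>i. [1,1,0,0] ! i"])
      using o h by (simp add: B4_def All_less_Suc numeral_eq_Suc) }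
  moreover
  { assume h: "even (a 0)" "odd (a 1)"
    have ?thesis
      apply (rule exI[of _ "\<lambda>i. [0,1,1,-1] ! i"], rule exI[of _ "\<lambda>i. [0,0,1,1] ! i"], rule exI[of _ "\<lambda>i. [2,1,1,-1] ! i"])
      using o h by (simp add: B4_def All_less_Suc numeral_eq_Suc) }
  moreover
  { assume h: "odd (a 0)" "even (a 1)"
    have ?thesis
      apply (rule exI[of _ "\<lambda>i. [1,0,1,-1] ! i"], rule exI[of _ "\<lambda>i. [0,0,1,1] ! i"], rule exI[of _ "\<lambda>i. [1,2,1,-1] ! i"])
      using o h by (simp add: B4_def All_less_Suc numeral_eq_Suc) }
  ultimately show ?thesis by blast
qed

lemma B4_le: "B4 s s \<le> (s 0 + s 1)^2 + (s 2 + s (3::nat))^2" for s :: "nat \<Rightarrow> real"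
proof -
  have "(s 0 + s 1)^2 + (s 2 + s 3)^2 - B4 s s = (s 0 - s 1)^2 + (s 2 - s 3)^2"
    by (simp add: B4_def power2_eq_square algebra_simps)
  thus ?thesis by (smt (verit) zero_le_power2)
qed

lemma B4_quad: "B4 (\<lambda>i. a * x i + b * y i + c * z i) (\<lambda>i. a * x i + b * y i + c * z i)
   = a^2 * B4 x x + b^2 * B4 y y + c^2 * B4 z z + 2*a*b * B4 x y + 2*a*c * B4 x z + 2*b*c*B4 y z"
  by (simp add: B4_def power2_eq_square algebra_simps)

lemma B4_sym: "B4 x y = B4 y x"
  by (simp add: B4_def algebra_simps)

lemma Ksign:
  fixes x y u :: "nat \<Rightarrow> real"
  assumes xx: "B4 x x > 0" and yy: "B4 y y = B4 x x" and xy: "B4 x y = 0"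
    and xu: "B4 x u = 0" and yu: "B4 y u = 0"
  shows "B4 u u < 0 \<or> (u 0 = 0 \<and> u 1 = 0 \<and> u 2 = 0 \<and> u 3 = 0)"
proof -
  define a where "a = B4 x x"
  define px where "px = x 0 + x 1"
  define rx where "rx = x 2 + x 3"
  define py where "py = y 0 + y 1"
  define ry where "ry = y 2 + y 3"
  define pu where "pu = u 0 + u 1"
  define ru where "ru = u 2 + u 3"
  define \<delta> where "\<delta> = px * ry - rx * py"
  have quad: "B4 (\<lambda>i. a1 * x i + b1 * y i + c1 * u i) (\<lambda>i. a1 * x i + b1 * y i + c1 * u i)
     = (a1^2 + b1^2) * a + c1^2 * B4 u u" for a1 b1 c1
    unfolding B4_quad using yy xy xu yu by (simp add: a_def algebra_simps)
  have le: "B4 (\<lambda>i. a1 * x i + b1 * y i + c1 * u i) (\<lambda>i. a1 * x i + b1 * y i + c1 * u i)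
     \<le> (a1 * px + b1 * py + c1 * pu)^2 + (a1 * rx + b1 * ry + c1 * ru)^2" for a1 b1 c1
    using B4_le[of "\<lambda>i. a1 * x i + b1 * y i + c1 * u i"]
    by (simp add: px_def py_def pu_def rx_def ry_def ru_def algebra_simps)
  have apos: "a > 0" using xx a_def by simp
  have d: "\<delta> \<noteq> 0"
  proof
    assume d0: "\<delta> = 0"
    have "(py^2 + (-px)^2) * a + 0^2 * B4 u u \<le> (py * px + -px * py + 0 * pu)^2 + (py * rx + -px * ry + 0 * ru)^2"
      using le[of py "-px" 0] unfolding quad .
    moreover have "py * rx + -px * ry = 0" using d0 unfolding \<delta>_def by simp
    ultimately have "(py^2 + px^2) * a \<le> 0" by simp
    hence 1: "py = 0 \<and> px = 0" using apos
      by (smt (verit) mult_pos_pos sum_power2_gt_zero_iff)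
    have "(ry^2 + (-rx)^2) * a + 0^2 * B4 u u \<le> (ry * px + -rx * py + 0 * pu)^2 + (ry * rx + -rx * ry + 0 * ru)^2"
      using le[of ry "-rx" 0] unfolding quad .
    moreover have "ry * px + -rx * py = 0" using d0 unfolding \<delta>_def by (simp add: mult.commute)
    ultimately have "(ry^2 + rx^2) * a \<le> 0" by simp
    hence 2: "ry = 0 \<and> rx = 0" using apos
      by (smt (verit) mult_pos_pos sum_power2_gt_zero_iff)
    have "a \<le> 0" using le[of 1 0 0] quad[of 1 0 0] 1 2 by simp
    thus False using apos by simp
  qed
  define \<alpha> where "\<alpha> = (pu * ry - ru * py) / \<delta>"
  define \<beta> where "\<beta> = (px * ru - rx * pu) / \<delta>"
  have n1: "(pu * ry - ru * py) * px + (px * ru - rx * pu) * py = pu * \<delta>"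
    unfolding \<delta>_def by (simp add: algebra_simps)
  have n2: "(pu * ry - ru * py) * rx + (px * ru - rx * pu) * ry = ru * \<delta>"
    unfolding \<delta>_def by (simp add: algebra_simps)
  have "\<alpha> * px + \<beta> * py = ((pu * ry - ru * py) * px + (px * ru - rx * pu) * py) / \<delta>"
    unfolding \<alpha>_def \<beta>_def by (simp add: add_divide_distrib)
  hence e1: "-\<alpha> * px + - \<beta> * py + pu = 0" using d n1 by simp
  have "\<alpha> * rx + \<beta> * ry = ((pu * ry - ru * py) * rx + (px * ru - rx * pu) * ry) / \<delta>"
    unfolding \<alpha>_def \<beta>_def by (simp add: add_divide_distrib)
  hence e2: "-\<alpha> * rx + - \<beta> * ry + ru = 0" using d n2 by simp
  have main: "(\<alpha>^2 + \<beta>^2) * a + B4 u u \<le> 0"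
    using le[of "-\<alpha>" "-\<beta>" 1] quad[of "-\<alpha>" "-\<beta>" 1] e1 e2 by simp
  show ?thesis
  proof (cases "B4 u u < 0")
    case True thus ?thesis by simp
  next
    case False
    hence "(\<alpha>^2 + \<beta>^2) * a \<le> 0" using main by simp
    hence ab: "\<alpha> = 0 \<and> \<beta> = 0" using apos
      by (smt (verit) mult_pos_pos sum_power2_gt_zero_iff)
    hence uu: "B4 u u = 0" using main False by simp
    have "pu = 0" "ru = 0" using e1 e2 ab by simp_all
    have u1: "u 1 = - u 0" and u3: "u 3 = - u 2" using \<open>pu = 0\<close> \<open>ru = 0\<close> unfolding pu_def ru_def by simp_all
    have "B4 u u = -4 * ((u 0)^2 + (u 2)^2)" unfolding B4_def u1 u3 by (simp add: power2_eq_square algebra_simps)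
    hence "(u 0)^2 + (u 2)^2 = 0" using uu by (smt (verit))
    hence "u 0 = 0 \<and> u 2 = 0" by (smt (verit) sum_power2_eq_zero_iff)
    thus ?thesis using u1 u3 by simp
  qed
qed

lemma bil_cnj: "bil (\<lambda>t. cnj (x t)) (\<lambda>t. cnj (y t)) = cnj (bil x y)"
  by (simp add: bil_expand)

lemma Omega_cnj: "w \<in> Omega_cone \<Longrightarrow> (\<lambda>t. cnj (w t)) \<in> Omega_cone"
  unfolding Omega_cone_def by (simp add: bil_cnj bil_sym[of "\<lambda>t. cnj (w t)" w])

lemma Omega_scale:
  assumes "w \<in> Omega_cone" "\<alpha> \<noteq> 0"
  shows "(\<lambda>t. \<alpha> * w t) \<in> Omega_cone"
proof -
  have w: "\<forall>i\<ge>12. w i = 0" "bil w w = 0" "0 < Re (bil w (\<lambda>t. cnj (w t)))"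
    using assms(1) unfolding Omega_cone_def by auto
  have "bil (\<lambda>t. \<alpha> * w t) (\<lambda>t. cnj (\<alpha> * w t)) = (\<alpha> * cnj \<alpha>) * bil w (\<lambda>t. cnj (w t))"
    by (simp add: bil_scale_left bil_scale_right)
  also have "\<alpha> * cnj \<alpha> = complex_of_real ((cmod \<alpha>)^2)"
    using complex_norm_square[of \<alpha>] by simp
  finally have e: "Re (bil (\<lambda>t. \<alpha> * w t) (\<lambda>t. cnj (\<alpha> * w t))) = (cmod \<alpha>)^2 * Re (bil w (\<lambda>t. cnj (w t)))"
    by simp
  have "(cmod \<alpha>)^2 > 0" using assms(2) by simp
  hence "0 < Re (bil (\<lambda>t. \<alpha> * w t) (\<lambda>t. cnj (\<alpha> * w t)))" unfolding e using w(3) by simp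
  thus ?thesis unfolding Omega_cone_def using w by (simp add: bil_scale_left bil_scale_right)
qed

lemma cc_path:
  assumes "continuous_on {0..1::real} g" "g ` {0..1} \<subseteq> S"
  shows "connected_component S (g 0) (g 1)"
proof (rule connected_componentI[of "g ` {0..1}"])
  show "connected (g ` {0..1})" by (rule connected_continuous_image[OF assms(1)]) simp
qed (use assms(2) in auto)

lemma cc_scale:
  assumes "w \<in> Omega_cone" "\<alpha> \<noteq> 0"
  shows "connected_component Omega_cone w (\<lambda>t. \<alpha> * w t)"
proof (rule connected_componentI[of "(\<lambda>\<beta>. \<lambda>t. \<beta> * w t) ` (- {0})"])
  have "connected (- {0::complex})"
    by (rule path_connected_imp_connected, rule path_connected_punctured_universe) simp
  moreover have "continuous_on (- {0::complex}) (\<lambda>\<beta>. \<lambda>t. \<beta> * w t)"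
    by (intro continuous_intros)
  ultimately show "connected ((\<lambda>\<beta>. \<lambda>t. \<beta> * w t) ` (- {0}))"
    by (rule connected_continuous_image[rotated])
  show "(\<lambda>\<beta>. \<lambda>t. \<beta> * w t) ` (- {0}) \<subseteq> Omega_cone"
    using Omega_scale[OF assms(1)] by auto
  show "w \<in> (\<lambda>\<beta>. \<lambda>t. \<beta> * w t) ` (- {0})" by (rule image_eqI[where x=1]) simp_all
  show "(\<lambda>t. \<alpha> * w t) \<in> (\<lambda>\<beta>. \<lambda>t. \<beta> * w t) ` (- {0})" by (rule image_eqI[where x=\<alpha>]) (use assms(2) in simp_all)
qed

lemma cc_cnj:
  assumes "connected_component Omega_cone x y"
  shows "connected_component Omega_cone (\<lambda>t. cnj (x t)) (\<lambda>t. cnj (y t))"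
proof -
  obtain T where T: "connected T" "T \<subseteq> Omega_cone" "x \<in> T" "y \<in> T"
    using assms unfolding connected_component_def by blast
  have c: "continuous_on UNIV (\<lambda>f::nat \<Rightarrow> complex. \<lambda>t. cnj (f t))"
    by (intro continuous_on_coordinatewise_then_product continuous_on_cnj continuous_on_product_coordinates)
  show ?thesis
  proof (rule connected_componentI[of "(\<lambda>f. \<lambda>t. cnj (f t)) ` T"])
    show "connected ((\<lambda>f. \<lambda>t. cnj (f t)) ` T)"
      by (rule connected_continuous_image[OF continuous_on_subset[OF c] T(1)]) simp
    show "(\<lambda>f. \<lambda>t. cnj (f t)) ` T \<subseteq> Omega_cone" using T(2) Omega_cnj by auto
  qed (use T in auto)
qed

definition lc :: "nat \<Rightarrow> (nat \<Rightarrow> 'a::ring_1) \<Rightarrow> (nat \<Rightarrow> nat \<Rightarrow> int) \<Rightarrow> nat \<Rightarrow> 'a" where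
  "lc n c b = (\<lambda>t. \<Sum>i<n. c i * of_int (b i t))"

lemma span_coef_lc: "span_coef n b = range (\<lambda>c. lc n c b)"
  unfolding span_coef_def lc_def by auto

lemma zspan_lc: "zspan n b = range (\<lambda>c. lc n c b)"
  unfolding zspan_def span_coef_lc ..

lemma lc_int: "lc n c b = (\<lambda>t. \<Sum>i<n. c i * b i t)" for c :: "nat \<Rightarrow> int"
  unfolding lc_def by simp

lemma ofv_lc: "ofv (lc n c b) = lc n (\<lambda>i. of_int (c i)) b"
  unfolding ofv_def lc_def by simp

lemma of_rat_lc: "(\<lambda>t. of_rat (lc n c b t)) = lc n (\<lambda>i. of_rat (c i)) b"
  unfolding lc_def by (simp add: of_rat_sum of_rat_mult)

lemma of_real_lc: "(\<lambda>t. of_real (lc n c b t)) = lc n (\<lambda>i. of_real (c i)) b"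
  unfolding lc_def by simp

lemma cnj_lc: "(\<lambda>t. cnj (lc n c b t)) = lc n (\<lambda>i. cnj (c i)) b"
  unfolding lc_def by simp

lemma lc_basis: "j < n \<Longrightarrow> b j = lc n (\<lambda>i. if i = j then 1 else 0) b"
proof (rule ext)
  fix t assume j: "j < n"
  have "(\<lambda>i. (if i = j then 1 else 0) * b i t) = (\<lambda>i. if i = j then b i t else 0)" by auto
  thus "b j t = lc n (\<lambda>i. if i = j then 1 else 0) b t" unfolding lc_int using j by (simp only:) simp
qed

lemma lc_comb: "(\<lambda>t. of_int n * (lc p c b t + lc q c' b' t) + lc p c'' b t + lc q c''' b' t)
   = (\<lambda>t. lc p (\<lambda>i. of_int n * c i + c'' i) b t + lc q (\<lambda>i. of_int n * c' i + c''' i) b' t)"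
  unfolding lc_def by (simp add: sum.distrib sum_distrib_left algebra_simps)

lemma lc_add: "(\<lambda>t. lc p c b t + lc p c' b t) = lc p (\<lambda>i. c i + c' i) b"
  unfolding lc_def by (simp add: sum.distrib algebra_simps)

lemma lc_scale: "(\<lambda>t. x * lc p c b t) = lc p (\<lambda>i. x * c i) b"
  unfolding lc_def by (simp add: sum_distrib_left algebra_simps)

lemma lc_diff: "(\<lambda>t. lc p c b t - lc p c' b t) = lc p (\<lambda>i. c i - c' i) b"
  unfolding lc_def by (simp add: sum_subtractf algebra_simps)

lemma lc_Lam: "(\<forall>i<n. b i \<in> Lam) \<Longrightarrow> 12 \<le> t \<Longrightarrow> lc n c b t = 0"
  unfolding lc_def Lam_def by simp

lemma bil_lc':
  "bil (lc n c b) (lc m c' b') = (\<Sum>i<n. \<Sum>j<m. c i * c' j * of_int (bil (b i) (b' j)))"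
  unfolding lc_def by (rule bil_lc)

lemma U2U2_vals: "U2U2_gram 0 0 = 0" "U2U2_gram 0 1 = 2" "U2U2_gram 0 2 = 0" "U2U2_gram 0 3 = 0" "U2U2_gram 1 0 = 2" "U2U2_gram 1 1 = 0" "U2U2_gram 1 2 = 0" "U2U2_gram 1 3 = 0" "U2U2_gram 2 0 = 0" "U2U2_gram 2 1 = 0" "U2U2_gram 2 2 = 0" "U2U2_gram 2 3 = 2" "U2U2_gram 3 0 = 0" "U2U2_gram 3 1 = 0" "U2U2_gram 3 2 = 2" "U2U2_gram 3 3 = 0"
  by (simp_all add: U2U2_gram_def doubleton_eq_iff)

lemma E8m2_vals: "E8m2_gram 0 0 = -4" "E8m2_gram 0 1 = 0" "E8m2_gram 0 2 = 2" "E8m2_gram 0 3 = 0" "E8m2_gram 0 4 = 0" "E8m2_gram 0 5 = 0" "E8m2_gram 0 6 = 0" "E8m2_gram 0 7 = 0" "E8m2_gram 1 0 = 0" "E8m2_gram 1 1 = -4" "E8m2_gram 1 2 = 0" "E8m2_gram 1 3 = 2" "E8m2_gram 1 4 = 0" "E8m2_gram 1 5 = 0" "E8m2_gram 1 6 = 0" "E8m2_gram 1 7 = 0" "E8m2_gram 2 0 = 2" "E8m2_gram 2 1 = 0" "E8m2_gram 2 2 = -4" "E8m2_gram 2 3 = 2" "E8m2_gram 2 4 = 0" "E8m2_gram 2 5 = 0" "E8m2_gram 2 6 = 0" "E8m2_gram 2 7 = 0" "E8m2_gram 3 0 = 0" "E8m2_gram 3 1 = 2" "E8m2_gram 3 2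 = 2" "E8m2_gram 3 3 = -4" "E8m2_gram 3 4 = 2" "E8m2_gram 3 5 = 0" "E8m2_gram 3 6 = 0" "E8m2_gram 3 7 = 0" "E8m2_gram 4 0 = 0" "E8m2_gram 4 1 = 0" "E8m2_gram 4 2 = 0" "E8m2_gram 4 3 = 2" "E8m2_gram 4 4 = -4" "E8m2_gram 4 5 = 2" "E8m2_gram 4 6 = 0" "E8m2_gram 4 7 = 0" "E8m2_gram 5 0 = 0" "E8m2_gram 5 1 = 0" "E8m2_gram 5 2 = 0" "E8m2_gram 5 3 = 0" "E8m2_gram 5 4 = 2" "E8m2_gram 5 5 = -4" "E8m2_gram 5 6 = 2" "E8m2_gram 5 7 = 0" "E8m2_gram 6 0 = 0" "E8m2_gram 6 1 = 0" "E8m2_gram 6 2 = 0" "E8m2_gram 6 3 = 0" "E8m2_gram 6 4 = 0" "E8m2_gram 6 5 = 2" "E8m2_gram 6 6 = -4" "E8m2_gram 6 7 = 2" "E8m2_gram 7 0 = 0" "E8m2_gram 7 1 = 0" "E8m2_gram 7 2 = 0" "E8m2_gram 7 3 = 0" "E8m2_gram 7 4 = 0" "E8m2_gram 7 5 = 0" "E8m2_gram 7 6 = 2" "E8m2_gram 7 7 = -4"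
  by (simp_all add: E8m2_gram_def E8_edge_def doubleton_eq_iff insert_commute)

lemma sum4: "(\<Sum>i<4. f i) = f 0 + f 1 + f 2 + f (3::nat)"
  by (simp add: numeral_eq_Suc)
lemma sum8: "(\<Sum>i<8. f i) = f 0 + f 1 + f 2 + f 3 + f 4 + f 5 + f 6 + f (7::nat)"
  by (simp add: numeral_eq_Suc)

lemma gram_k:
  assumes "\<forall>i<4. \<forall>j<4. bil (k i) (k j) = U2U2_gram i j"
  shows "bil (k 0) (k 0) = 0" "bil (k 0) (k 1) = 2" "bil (k 0) (k 2) = 0" "bil (k 0) (k 3) = 0" "bil (k 1) (k 0) = 2" "bil (k 1) (k 1) = 0" "bil (k 1) (k 2) = 0" "bil (k 1) (k 3) = 0" "bil (k 2) (k 0) = 0" "bil (k 2) (k 1) = 0" "bil (k 2) (k 2) = 0" "bil (k 2) (k 3) = 2" "bil (k 3) (k 0) = 0" "bil (k 3) (k 1) = 0" "bil (k 3) (k 2) = 2" "bil (k 3) (k 3) = 0"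
  using assms by (simp_all add: U2U2_gram_def doubleton_eq_iff)

lemma gram_e:
  assumes "\<forall>i<8. \<forall>j<8. bil (e i) (e j) = E8m2_gram i j"
  shows "bil (e 0) (e 0) = -4" "bil (e 0) (e 1) = 0" "bil (e 0) (e 2) = 2" "bil (e 0) (e 3) = 0" "bil (e 0) (e 4) = 0" "bil (e 0) (e 5) = 0" "bil (e 0) (e 6) = 0" "bil (e 0) (e 7) = 0" "bil (e 1) (e 0) = 0" "bil (e 1) (e 1) = -4" "bil (e 1) (e 2) = 0" "bil (e 1) (e 3) = 2" "bil (e 1) (e 4) = 0" "bil (e 1) (e 5) = 0" "bil (e 1) (e 6) = 0" "bil (e 1) (e 7) = 0" "bil (e 2) (e 0) = 2" "bil (e 2) (e 1) = 0" "bil (e 2) (e 2) = -4" "bil (e 2) (e 3) = 2" "bil (e 2) (e 4) = 0" "bil (e 2) (e 5) = 0" "bil (e 2) (e 6) = 0" "bil (e 2) (e 7) = 0" "bil (e 3) (e 0) = 0" "bil (e 3) (e 1) = 2" "bil (e 3) (e 2) = 2" "bil (e 3) (e 3) = -4" "bil (e 3) (e 4) = 2" "bil (e 3) (e 5) = 0" "bil (e 3) (e 6) = 0" "bil (e 3) (e 7) = 0" "bil (e 4) (e 0) = 0" "bil (e 4) (e 1) = 0" "bil (e 4) (e 2) = 0" "bil (e 4) (e 3) = 2" "bil (e 4) (e 4) = -4" "bil (e 4) (e 5) = 2" "bil (e 4) (e 6) = 0" "bil (e 4) (e 7) = 0" "bil (e 5) (e 0) = 0" "bil (e 5) (e 1)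 = 0" "bil (e 5) (e 2) = 0" "bil (e 5) (e 3) = 0" "bil (e 5) (e 4) = 2" "bil (e 5) (e 5) = -4" "bil (e 5) (e 6) = 2" "bil (e 5) (e 7) = 0" "bil (e 6) (e 0) = 0" "bil (e 6) (e 1) = 0" "bil (e 6) (e 2) = 0" "bil (e 6) (e 3) = 0" "bil (e 6) (e 4) = 0" "bil (e 6) (e 5) = 2" "bil (e 6) (e 6) = -4" "bil (e 6) (e 7) = 2" "bil (e 7) (e 0) = 0" "bil (e 7) (e 1) = 0" "bil (e 7) (e 2) = 0" "bil (e 7) (e 3) = 0" "bil (e 7) (e 4) = 0" "bil (e 7) (e 5) = 0" "bil (e 7) (e 6) = 2" "bil (e 7) (e 7) = -4"
  using assms by (simp_all add: E8m2_gram_def E8_edge_def doubleton_eq_iff insert_commute)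

lemma bil_kk:
  assumes "\<forall>i<4. \<forall>j<4. bil (k i) (k j) = U2U2_gram i j"
  shows "bil (lc 4 c k) (lc 4 c' k) = B4 c c'"
  unfolding bil_lc' sum4 gram_k[OF assms] by (simp add: B4_def algebra_simps)

lemma bil_ee:
  assumes "\<forall>i<8. \<forall>j<8. bil (e i) (e j) = E8m2_gram i j"
  shows "bil (lc 8 c e) (lc 8 c e) = -4 * QE c"
  unfolding bil_lc' sum8 gram_e[OF assms] by (simp add: QE_def algebra_simps)

lemma bil_ke:
  assumes "\<forall>i<4. \<forall>j<8. bil (k i) (e j) = 0"
  shows "bil (lc 4 c k) (lc 8 c' e) = 0" "bil (lc 8 c' e) (lc 4 c k) = 0"
  using assms by (simp_all add: bil_lc' bil_sym[of "e _"])

definition Pp :: "(nat \<Rightarrow> real) \<Rightarrow> nat \<Rightarrow> real" where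
  "Pp Z = (\<lambda>i. if i < 2 then (Z 0 + Z 1) / 2 else if i < 4 then (Z 2 + Z 3) / 2 else 0)"

definition Tt :: "real \<Rightarrow> (nat \<Rightarrow> real) \<Rightarrow> nat \<Rightarrow> real" where
  "Tt t Z = (\<lambda>i. Pp Z i + t * (Z i - Pp Z i))"

definition Fv :: "(nat \<Rightarrow> real) \<Rightarrow> (nat \<Rightarrow> real) \<Rightarrow> nat \<Rightarrow> complex" where
  "Fv X Y = (\<lambda>i. complex_of_real (bil Y Y * X i - bil X Y * Y i)
      + \<i> * complex_of_real (sqrt (bil X X * bil Y Y - (bil X Y)^2) * Y i))"

lemma bil_Pp_gap:
  "bil Z Z = bil (Pp Z) (Pp Z) - ((Z 0 - Z 1)^2 + (Z 2 - Z 3)^2 / 2) - 4 * QE (\<lambda>i. Z (i + 4))"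
  by (simp add: bil_expand Pp_def QE_def power2_eq_square field_simps)

lemma bil_Pp_le: "bil Z Z \<le> bil (Pp Z) (Pp Z)"
proof -
  have "QE (\<lambda>i. Z (i + 4)) \<ge> 0" by (rule QE_nonneg)
  moreover have "(Z 0 - Z 1)^2 + (Z 2 - Z 3)^2 / 2 \<ge> 0" by simp
  ultimately show ?thesis using bil_Pp_gap[of Z] by linarith
qed

lemma bil_Tt: "bil (Tt t X) (Tt t Y) = bil (Pp X) (Pp Y) + t^2 * (bil X Y - bil (Pp X) (Pp Y))"
  by (simp add: bil_expand Tt_def Pp_def power2_eq_square field_simps)

lemma Tt_lin: "Tt t (\<lambda>i. a * X i + b * Y i) = (\<lambda>i. a * Tt t X i + b * Tt t Y i)"
  by (rule ext) (simp add: Tt_def Pp_def algebra_simps add_divide_distrib)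

lemma Tt_1: "Tt 1 Z = Z" by (simp add: Tt_def)
lemma Tt_0: "Tt 0 Z = Pp Z" by (simp add: Tt_def)

lemma bil_quad2: "bil (\<lambda>i. a * X i + b * Y i) (\<lambda>i. a * X i + b * Y i)
   = a^2 * bil X X + 2 * a * b * bil X Y + b^2 * bil Y Y"
  by (simp add: bil_add_left bil_add_right bil_scale_left bil_scale_right bil_sym[of Y X] power2_eq_square algebra_simps)

lemma Fv_in:
  assumes z: "\<forall>i\<ge>12. X i = 0" "\<forall>i\<ge>12. Y i = 0"
    and a: "bil X X > 0" and d: "bil X X * bil Y Y - (bil X Y)^2 > 0"
  shows "Fv X Y \<in> Omega_cone"
proof -
  define a where "a = bil X X"
  define b where "b = bil X Y"
  define c where "c = bil Y Y"
  define D where "D = sqrt (a * c - b^2)"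
  define U where "U = (\<lambda>i. c * X i - b * Y i)"
  define V where "V = (\<lambda>i. D * Y i)"
  have cpos: "c > 0"
  proof (rule ccontr)
    assume "\<not> c > 0"
    hence "a * c \<le> 0" using a a_def by (simp add: mult_nonneg_nonpos)
    thus False using d a_def b_def c_def by (smt (verit) zero_le_power2)
  qed
  have D2: "D^2 = a * c - b^2" unfolding D_def using d a_def b_def c_def by simp
  have F: "Fv X Y = (\<lambda>i. complex_of_real (U i) + \<i> * complex_of_real (V i))"
    unfolding Fv_def U_def V_def D_def a_def b_def c_def ..
  have Fc: "(\<lambda>i. cnj (Fv X Y i)) = (\<lambda>i. complex_of_real (U i) + \<i> * complex_of_real (- V i))"
    unfolding F by simp
  have UU: "bil U U = c * (a * c - b^2)"
    unfolding U_def
    by (simp only: bil_diff_left bil_diff_right bil_scale_left bil_scale_right)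
      (simp add: bil_sym[of Y X] a_def b_def c_def power2_eq_square algebra_simps)
  have VV: "bil V V = (a * c - b^2) * c"
    unfolding V_def by (simp only: bil_scale_left bil_scale_right) (use D2 in \<open>simp add: c_def[symmetric] power2_eq_square\<close>)
  have UV: "bil U V = 0" "bil V U = 0"
    unfolding U_def V_def
    by (simp_all only: bil_diff_left bil_diff_right bil_scale_left bil_scale_right)
      (simp_all add: bil_sym[of Y X] b_def c_def algebra_simps)
  have VmV: "bil V (\<lambda>i. - V i) = - bil V V" "bil U (\<lambda>i. - V i) = - bil U V"
    using bil_scale_right[of _ "-1" V] by simp_all
  have "bil (Fv X Y) (Fv X Y) = 0"
    unfolding F bil_complex UU VV UV by simp
  moreover have "0 < Re (bil (Fv X Y) (\<lambda>t. cnj (Fv X Y t)))"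
  proof -
    have "Re (bil (Fv X Y) (\<lambda>t. cnj (Fv X Y t))) = bil U U + bil V V"
      unfolding Fc unfolding F bil_complex VmV by simp
    also have "\<dots> = 2 * c * (a * c - b^2)" unfolding UU VV by simp
    also have "\<dots> > 0" using cpos d a_def b_def c_def by simp
    finally show ?thesis .
  qed
  moreover have "\<forall>i\<ge>12. Fv X Y i = 0" using z unfolding Fv_def by simp
  ultimately show ?thesis unfolding Omega_cone_def by simp
qed

definition Aa :: "nat \<Rightarrow> complex" where
  "Aa = (\<lambda>i. if i < 2 then 1 else if i < 4 then \<i> * complex_of_real (sqrt 2) else 0)"

lemma sq2: "complex_of_real (sqrt 2) * complex_of_real (sqrt 2) = 2"
proof -
  have "complex_of_real (sqrt 2) * complex_of_real (sqrt 2) = complex_of_real (sqrt 2 * sqrt 2)"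
    by (rule of_real_mult[symmetric])
  also have "sqrt 2 * sqrt 2 = (2::real)" by simp
  finally show ?thesis by simp
qed

lemma bil_vform:
  "bil (\<lambda>i. if i < 2 then \<alpha> else if i < 4 then \<beta> else 0) (\<lambda>i. if i < 2 then \<alpha>' else if i < 4 then \<beta>' else 0)
   = 4 * \<alpha> * \<alpha>' + 2 * \<beta> * \<beta>'"
  by (simp add: bil_expand algebra_simps)

lemma endpoint:
  assumes "(\<lambda>i. if i < 2 then \<alpha> else if i < 4 then \<beta> else 0) \<in> Omega_cone"
  shows "\<alpha> \<noteq> 0 \<and> ((\<lambda>i. if i < 2 then \<alpha> else if i < 4 then \<beta> else 0) = (\<lambda>i. \<alpha> * Aa i) \<or>
           (\<lambda>i. if i < 2 then \<alpha> else if i < 4 then \<beta> else 0) = (\<lambda>i. \<alpha> * cnj (Aa i)))"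
proof -
  have c: "(\<lambda>t. cnj (if t < 2 then \<alpha> else if t < 4 then \<beta> else 0)) = (\<lambda>i. if i < 2 then cnj \<alpha> else if i < 4 then cnj \<beta> else 0)"
    by (rule ext) simp
  have h1: "4 * \<alpha> * \<alpha> + 2 * \<beta> * \<beta> = 0" and h2: "0 < Re (4 * \<alpha> * cnj \<alpha> + 2 * \<beta> * cnj \<beta>)"
  proof -
    have "bil (\<lambda>i. if i < 2 then \<alpha> else if i < 4 then \<beta> else 0) (\<lambda>i. if i < 2 then \<alpha> else if i < 4 then \<beta> else 0) = 0"
      "0 < Re (bil (\<lambda>i. if i < 2 then \<alpha> else if i < 4 then \<beta> else 0) (\<lambda>t. cnj (if t < 2 then \<alpha> else if t < 4 then \<beta> else 0)))"
      using assms unfolding Omega_cone_def mem_Collect_eq by auto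
    thus "4 * \<alpha> * \<alpha> + 2 * \<beta> * \<beta> = 0" "0 < Re (4 * \<alpha> * cnj \<alpha> + 2 * \<beta> * cnj \<beta>)"
      unfolding c bil_vform by auto
  qed
  have a0: "\<alpha> \<noteq> 0"
  proof
    assume "\<alpha> = 0"
    with h1 have "\<beta> = 0" by simp
    with h2 \<open>\<alpha> = 0\<close> show False by simp
  qed
  have "(\<beta> - \<i> * complex_of_real (sqrt 2) * \<alpha>) * (\<beta> + \<i> * complex_of_real (sqrt 2) * \<alpha>) = \<beta> * \<beta> + 2 * \<alpha> * \<alpha>"
  proof -
    note s = sq2
    show ?thesis by (simp add: algebra_simps s)
  qed
  also have "\<dots> = (4 * \<alpha> * \<alpha> + 2 * \<beta> * \<beta>) / 2" by (simp add: field_simps)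
  also have "\<dots> = 0" using h1 by simp
  finally have "\<beta> = \<i> * complex_of_real (sqrt 2) * \<alpha> \<or> \<beta> = - (\<i> * complex_of_real (sqrt 2) * \<alpha>)"
    by (auto simp add: add_eq_0_iff)
  thus ?thesis
  proof
    assume b: "\<beta> = \<i> * complex_of_real (sqrt 2) * \<alpha>"
    have "(\<lambda>i. if i < 2 then \<alpha> else if i < 4 then \<beta> else 0) = (\<lambda>i. \<alpha> * Aa i)"
      by (rule ext) (simp add: Aa_def b)
    thus ?thesis using a0 by simp
  next
    assume b: "\<beta> = - (\<i> * complex_of_real (sqrt 2) * \<alpha>)"
    have "(\<lambda>i. if i < 2 then \<alpha> else if i < 4 then \<beta> else 0) = (\<lambda>i. \<alpha> * cnj (Aa i))"
      by (rule ext) (simp add: Aa_def b)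
    thus ?thesis using a0 by simp
  qed
qed

lemma Aa_form: "Aa = (\<lambda>i. if i < 2 then 1 else if i < 4 then \<i> * complex_of_real (sqrt 2) else 0)"
  by (simp add: Aa_def)

lemma Aa_in: "Aa \<in> Omega_cone"
proof -
  have c: "(\<lambda>t. cnj (Aa t)) = (\<lambda>i. if i < 2 then 1 else if i < 4 then - \<i> * complex_of_real (sqrt 2) else 0)"
    by (rule ext) (simp add: Aa_def)
  note s = sq2
  show ?thesis
    unfolding Omega_cone_def mem_Collect_eq c
    by (simp add: Aa_form bil_vform algebra_simps s)
qed

lemma Aa_cnj_in: "(\<lambda>i. cnj (Aa i)) \<in> Omega_cone"
  by (rule Omega_cnj[OF Aa_in])

lemma w_decomp: "w = (\<lambda>i. complex_of_real (Re (w i)) + \<i> * complex_of_real (Im (w i)))"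
  by (rule ext) (simp add: complex_eq_iff)

lemma w_decomp_cnj: "(\<lambda>i. cnj (w i)) = (\<lambda>i. complex_of_real (Re (w i)) + \<i> * complex_of_real (- Im (w i)))"
  by (rule ext) (simp add: complex_eq_iff)

lemma Omega_real:
  assumes "w \<in> Omega_cone"
  defines "X \<equiv> (\<lambda>i. Re (w i))" and "Y \<equiv> (\<lambda>i. Im (w i))"
  shows "bil X X = bil Y Y" "bil X Y = 0" "bil X X > 0" "\<forall>i\<ge>12. X i = 0" "\<forall>i\<ge>12. Y i = 0"
proof -
  have w: "\<forall>i\<ge>12. w i = 0" "bil w w = 0" "0 < Re (bil w (\<lambda>t. cnj (w t)))"
    using assms(1) unfolding Omega_cone_def by auto
  have "bil w w = complex_of_real (bil X X - bil Y Y) + \<i> * complex_of_real (bil X Y + bil Y X)"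
    unfolding X_def Y_def by (subst (1 2) w_decomp) (rule bil_complex)
  hence e: "bil X X - bil Y Y = 0" "bil X Y + bil Y X = 0" using w(2)
    by (simp_all add: complex_eq_iff)
  thus "bil X X = bil Y Y" "bil X Y = 0" by (simp_all add: bil_sym[of Y X])
  have "bil w (\<lambda>t. cnj (w t)) = complex_of_real (bil X X - bil Y (\<lambda>i. - Y i)) + \<i> * complex_of_real (bil X (\<lambda>i. - Y i) + bil Y X)"
    unfolding X_def Y_def w_decomp_cnj by (subst w_decomp) (rule bil_complex)
  moreover have "bil Y (\<lambda>i. - Y i) = - bil Y Y" using bil_scale_right[of Y "-1" Y] by simp
  ultimately have "Re (bil w (\<lambda>t. cnj (w t))) = bil X X + bil Y Y" by simp
  thus "bil X X > 0" using w(3) e by simp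
  show "\<forall>i\<ge>12. X i = 0" "\<forall>i\<ge>12. Y i = 0" using w(1) unfolding X_def Y_def by simp_all
qed

lemma Fv_Pp_form:
  "Fv (Pp X) (Pp Y) = (\<lambda>i. if i < 2 then Fv (Pp X) (Pp Y) 0 else if i < 4 then Fv (Pp X) (Pp Y) 2 else 0)"
  by (rule ext) (simp add: Fv_def Pp_def)

lemma to_A:
  assumes wO: "w \<in> Omega_cone"
  shows "connected_component Omega_cone w Aa \<or> connected_component Omega_cone w (\<lambda>i. cnj (Aa i))"
proof -
  define X where "X = (\<lambda>i. Re (w i))"
  define Y where "Y = (\<lambda>i. Im (w i))"
  note R = Omega_real[OF wO, folded X_def Y_def]
  define a where "a = bil X X"
  have apos: "a > 0" using R(3) a_def by simp
  define g where "g = (\<lambda>t. Fv (Tt t X) (Tt t Y))"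
  have key: "\<alpha>^2 * bil (Tt t X) (Tt t X) + 2 * \<alpha> * \<beta> * bil (Tt t X) (Tt t Y) + \<beta>^2 * bil (Tt t Y) (Tt t Y)
      \<ge> a * (\<alpha>^2 + \<beta>^2)" if t: "0 \<le> t" "t \<le> 1" for t \<alpha> \<beta>
  proof -
    define Z where "Z = (\<lambda>i. \<alpha> * X i + \<beta> * Y i)"
    have 1: "bil (Tt t Z) (Tt t Z) = \<alpha>^2 * bil (Tt t X) (Tt t X) + 2 * \<alpha> * \<beta> * bil (Tt t X) (Tt t Y) + \<beta>^2 * bil (Tt t Y) (Tt t Y)"
      unfolding Z_def Tt_lin by (rule bil_quad2)
    have 2: "bil Z Z = a * (\<alpha>^2 + \<beta>^2)"
      unfolding Z_def bil_quad2 using R(1,2) a_def by (simp add: algebra_simps)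
    have t2: "t^2 \<le> 1" using t by (simp add: power_le_one)
    have "bil (Tt t Z) (Tt t Z) - bil Z Z = (1 - t^2) * (bil (Pp Z) (Pp Z) - bil Z Z)"
      unfolding bil_Tt by (simp add: algebra_simps)
    also have "\<dots> \<ge> 0" using t2 bil_Pp_le[of Z] by simp
    finally show ?thesis using 1 2 by simp
  qed
  have pos: "bil (Tt t X) (Tt t X) > 0 \<and> bil (Tt t X) (Tt t X) * bil (Tt t Y) (Tt t Y) - (bil (Tt t X) (Tt t Y))^2 > 0"
    if t: "0 \<le> t" "t \<le> 1" for t
  proof -
    define pa where "pa = bil (Tt t X) (Tt t X)"
    define pb where "pb = bil (Tt t X) (Tt t Y)"
    define pc where "pc = bil (Tt t Y) (Tt t Y)"
    have k1: "pa \<ge> a" using key[OF t, of 1 0] unfolding pa_def by simp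
    hence pap: "pa > 0" using apos by simp
    have "(-pb)^2 * pa + 2 * (-pb) * pa * pb + pa^2 * pc \<ge> a * ((-pb)^2 + pa^2)"
      using key[OF t, of "-pb" pa] unfolding pa_def pb_def pc_def by simp
    moreover have "a * ((-pb)^2 + pa^2) > 0" using apos pap by (simp add: add_nonneg_pos)
    ultimately have "pa * (pa * pc - pb^2) > 0" by (simp add: algebra_simps power2_eq_square)
    hence "pa * pc - pb^2 > 0" using pap by (simp add: zero_less_mult_iff)
    thus ?thesis using pap unfolding pa_def pb_def pc_def by simp
  qed
  have zX: "\<forall>i\<ge>12. Tt t X i = 0" "\<forall>i\<ge>12. Tt t Y i = 0" for t
    using R(4,5) by (simp_all add: Tt_def Pp_def X_def Y_def)
  have gin: "g ` {0..1} \<subseteq> Omega_cone"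
  proof
    fix z assume "z \<in> g ` {0..1}"
    then obtain t where t: "0 \<le> t" "t \<le> 1" "z = g t" by auto
    from pos[OF t(1,2)] have p: "bil (Tt t X) (Tt t X) > 0" "bil (Tt t X) (Tt t X) * bil (Tt t Y) (Tt t Y) - (bil (Tt t X) (Tt t Y))^2 > 0"
      by auto
    show "z \<in> Omega_cone" unfolding t(3) g_def by (rule Fv_in[OF zX p])
  qed
  have gc: "continuous_on {0..1} g"
    unfolding g_def Fv_def bil_Tt
    by (intro continuous_on_coordinatewise_then_product) (simp add: Tt_def; intro continuous_intros)
  have c01: "connected_component Omega_cone (g 0) (g 1)" by (rule cc_path[OF gc gin])
  have g1: "g 1 = (\<lambda>i. complex_of_real a * w i)"
  proof (rule ext)
    fix i
    have s: "sqrt (a * a) = a" using apos by simp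
    have YY: "bil Y Y = a" using R(1) a_def by simp
    have "g 1 i = complex_of_real (a * X i) + \<i> * complex_of_real (a * Y i)"
      unfolding g_def Tt_1 Fv_def YY R(2) a_def[symmetric] using s by (simp add: power2_eq_square)
    also have "\<dots> = complex_of_real a * w i" by (simp add: X_def Y_def complex_eq_iff)
    finally show "g 1 i = complex_of_real a * w i" .
  qed
  have c1: "connected_component Omega_cone w (g 1)"
    unfolding g1 by (rule cc_scale[OF wO]) (use apos in simp)
  have g0: "g 0 = (\<lambda>i. if i < 2 then g 0 0 else if i < 4 then g 0 2 else 0)"
    unfolding g_def Tt_0 by (rule Fv_Pp_form)
  have g0in: "g 0 \<in> Omega_cone" using gin by auto
  hence E: "g 0 0 \<noteq> 0 \<and> (g 0 = (\<lambda>i. g 0 0 * Aa i) \<or> g 0 = (\<lambda>i. g 0 0 * cnj (Aa i)))"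
    using endpoint[of "g 0 0" "g 0 2"] g0 by simp
  have w0: "connected_component Omega_cone w (g 0)"
    by (rule connected_component_trans[OF c1 connected_component_sym[OF c01]])
  show ?thesis
  proof (cases "g 0 = (\<lambda>i. g 0 0 * Aa i)")
    case True
    have "connected_component Omega_cone Aa (g 0)"
      using cc_scale[OF Aa_in, of "g 0 0"] E True by simp
    thus ?thesis using w0 connected_component_trans connected_component_sym by blast
  next
    case False
    hence "g 0 = (\<lambda>i. g 0 0 * cnj (Aa i))" using E by simp
    hence "connected_component Omega_cone (\<lambda>i. cnj (Aa i)) (g 0)"
      using cc_scale[OF Aa_cnj_in, of "g 0 0"] E by simp
    thus ?thesis using w0 connected_component_trans connected_component_sym by blast
  qed
qed

lemma conn_or:
  assumes "w0 \<in> Omega_cone" "w1 \<in> Omega_cone"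
  shows "connected_component Omega_cone w0 w1 \<or> connected_component Omega_cone w0 (\<lambda>i. cnj (w1 i))"
proof -
  have cc: "(\<lambda>i. cnj (cnj (Aa i))) = Aa" by simp
  note T = connected_component_trans and S = connected_component_sym
  from to_A[OF assms(1)] to_A[OF assms(2)]
  show ?thesis
  proof (elim disjE)
    assume "connected_component Omega_cone w0 Aa" "connected_component Omega_cone w1 Aa"
    thus ?thesis using T S by blast
  next
    assume a: "connected_component Omega_cone w0 Aa" "connected_component Omega_cone w1 (\<lambda>i. cnj (Aa i))"
    have "connected_component Omega_cone (\<lambda>i. cnj (w1 i)) Aa" using cc_cnj[OF a(2)] cc by simp
    thus ?thesis using a(1) T S by blast
  next
    assume a: "connected_component Omega_cone w0 (\<lambda>i. cnj (Aa i))" "connected_component Omega_cone w1 Aa"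
    have "connected_component Omega_cone (\<lambda>i. cnj (w1 i)) (\<lambda>i. cnj (Aa i))" using cc_cnj[OF a(2)] by simp
    thus ?thesis using a(1) T S by blast
  next
    assume "connected_component Omega_cone w0 (\<lambda>i. cnj (Aa i))" "connected_component Omega_cone w1 (\<lambda>i. cnj (Aa i))"
    thus ?thesis using T S by blast
  qed
qed

lemma of_rat_complex: "(of_rat q :: complex) = complex_of_real (of_rat q)"
  by (cases q) (simp add: of_rat_rat)

lemma lc_cong: "(\<And>i. i < n \<Longrightarrow> c i = c' i) \<Longrightarrow> lc n c b = lc n c' b"
  unfolding lc_def by (rule ext) (rule sum.cong, auto)

lemma B4_half: "B4 (\<lambda>i. of_int (q i) / 2) (\<lambda>i. of_int (q i) / 2) = (of_int (q 0 * q 1 + q 2 * q 3) :: 'a::field_char_0)"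
  by (simp add: B4_def field_simps)

lemma B4_cx: "B4 (\<lambda>i. of_int (s i) + \<i> * of_int (t i)) (\<lambda>i. of_int (s' i) + \<i> * of_int (t' i))
   = of_int (B4 s s' - B4 t t') + \<i> * of_int (B4 s t' + B4 t s')"
  by (simp add: B4_def algebra_simps)

lemma B4_cx_half: "B4 (\<lambda>i. of_int (s i) + \<i> * of_int (t i)) (\<lambda>i. of_int (A i) / 2)
   = (of_int (B4 s A) + \<i> * of_int (B4 t A)) / 2"
  by (simp add: B4_def field_simps)

lemma B4_reim: "B4 \<gamma> \<delta> = complex_of_real (B4 (\<lambda>i. Re (\<gamma> i)) (\<lambda>i. Re (\<delta> i)) - B4 (\<lambda>i. Im (\<gamma> i)) (\<lambda>i. Im (\<delta> i)))
   + \<i> * complex_of_real (B4 (\<lambda>i. Re (\<gamma> i)) (\<lambda>i. Im (\<delta> i)) + B4 (\<lambda>i. Im (\<gamma> i)) (\<lambda>i. Re (\<delta> i)))"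
  by (simp add: B4_def complex_eq_iff algebra_simps)

lemma B4_of_rat: "B4 (\<lambda>i. (of_rat (c i) :: 'a::field_char_0)) (\<lambda>i. of_rat (c' i)) = of_rat (B4 c c')"
  by (simp add: B4_def of_rat_add of_rat_mult)

lemma QE_half: "QE (\<lambda>i. (of_int (m i) :: 'a::field_char_0) / 2) = of_int (QE m) / 4"
  by (simp add: QE_def field_simps)

lemma QE_of_int: "QE (\<lambda>i. (of_int (m i) :: 'a::field_char_0)) = of_int (QE m)"
  by (simp add: QE_def)

lemma Lam_even: "even (bil x x)" for x :: "nat \<Rightarrow> int"
proof -
  have "bil x x = 2 * (2 * x 0 * x 1 + x 2 * x 3 - 2 * (x 4 * x 4 + x 5 * x 5 + x 6 * x 6 + x 7 * x 7 + x 8 * x 8 + x 9 * x 9 + x 10 * x 10 + x 11 * x 11)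
    + 2 * (x 4 * x 6 + x 6 * x 7 + x 7 * x 8 + x 8 * x 9 + x 9 * x 10 + x 10 * x 11 + x 5 * x 7))"
    by (simp add: bil_expand algebra_simps)
  thus ?thesis by simp
qed

lemma zero_zspan: "(\<lambda>t. 0) \<in> zspan n b"
proof -
  have "(\<lambda>t. 0::int) = lc n (\<lambda>i. 0) b" unfolding lc_def by simp
  thus ?thesis unfolding zspan_lc by blast
qed

lemma of_int_div_eq: "even x \<Longrightarrow> (of_int (x div 2) :: 'a::field_char_0) = of_int x / 2"
  by (elim evenE) simp

lemma setup_basic:
  assumes S: "patching_setup k e d1 d2"
  shows "\<forall>i<4. k i \<in> Lam" "\<forall>i<4. \<forall>j<4. bil (k i) (k j) = U2U2_gram i j"
    "\<forall>i<8. e i \<in> Lam" "\<forall>i<8. \<forall>j<8. bil (e i) (e j) = E8m2_gram i j"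
    "\<forall>i<4. \<forall>j<8. bil (k i) (e j) = 0"
proof -
  show hk: "\<forall>i<4. k i \<in> Lam" "\<forall>i<4. \<forall>j<4. bil (k i) (k j) = U2U2_gram i j"
    "\<forall>i<8. e i \<in> Lam" "\<forall>i<8. \<forall>j<8. bil (e i) (e j) = E8m2_gram i j"
    using S unfolding patching_setup_def by auto
  have orth: "orth_compl (zspan 4 k) = zspan 8 e" using S unfolding patching_setup_def by auto
  show "\<forall>i<4. \<forall>j<8. bil (k i) (e j) = 0"
  proof (intro allI impI)
    fix i j :: nat assume ij: "i < 4" "j < 8"
    have "e j \<in> zspan 8 e" unfolding zspan_lc using lc_basis[OF ij(2), of e] by blast
    hence "e j \<in> orth_compl (zspan 4 k)" using orth by simp
    moreover have "k i \<in> zspan 4 k" unfolding zspan_lc using lc_basis[OF ij(1), of k] by blast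
    ultimately have "bil (e j) (k i) = 0" unfolding orth_compl_def by blast
    thus "bil (k i) (e j) = 0" by (simp add: bil_sym)
  qed
qed

lemma setup_facts:
  assumes S: "patching_setup k e d1 d2"
  obtains a m :: "nat \<Rightarrow> int" where
   "d1 = lc 4 (\<lambda>i. of_int (a i) / 2) k"
   "d2 = lc 8 (\<lambda>i. of_int (m i) / 2) e"
   "\<not> (\<forall>i<4. even (a i))"
   "\<not> (\<forall>i<8. even (m i))"
   "even (a 0 * a 1 + a 2 * a 3 - QE m)"
   "bil d1 d1 = of_int (a 0 * a 1 + a 2 * a 3)"
proof -
  note B = setup_basic[OF S]
  have orth: "orth_compl (zspan 4 k) = zspan 8 e"
    and d1s: "d1 \<in> span_coef 4 k" and d1i: "\<forall>y\<in>zspan 4 k. bil d1 (ofv y) \<in> \<int>"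
    and d1n: "d1 \<notin> ofv ` zspan 4 k"
    and d2s: "d2 \<in> span_coef 8 e" and d2n: "d2 \<notin> ofv ` zspan 8 e"
    and LE: "ofv ` Lam = {(\<lambda>t. of_int n * (d1 t + d2 t) + of_int (y t) + of_int (z t)) | n y z.
                   y \<in> zspan 4 k \<and> z \<in> zspan 8 e}"
    using S unfolding patching_setup_def by auto
  obtain c where c: "d1 = lc 4 c k" using d1s unfolding span_coef_lc by blast
  obtain b where b: "d2 = lc 8 b e" using d2s unfolding span_coef_lc by blast
  have kk: "bil (lc 4 c k) (lc 4 c' k) = B4 c c'" for c c' :: "nat \<Rightarrow> rat" by (rule bil_kk[OF B(2)])
  have kz: "k j \<in> zspan 4 k" if "j < 4" for j unfolding zspan_lc using lc_basis[OF that, of k] by blast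
  have ofvk: "ofv (k j) = lc 4 (\<lambda>i. if i = j then 1 else 0) k" if "j < 4" for j
  proof -
    have "ofv (k j) = ofv (lc 4 (\<lambda>i. if i = j then 1 else 0) k)" using lc_basis[OF that, of k] by simp
    also have "\<dots> = lc 4 (\<lambda>i. of_int (if i = j then 1 else 0)) k" by (rule ofv_lc)
    also have "\<dots> = lc 4 (\<lambda>i. if i = j then 1 else 0) k" by (rule lc_cong) simp
    finally show ?thesis .
  qed
  have int2: "2 * c i \<in> \<int>" if "i < 4" for i
  proof -
    have "bil d1 (ofv (k 0)) \<in> \<int>" "bil d1 (ofv (k 1)) \<in> \<int>" "bil d1 (ofv (k 2)) \<in> \<int>" "bil d1 (ofv (k 3)) \<in> \<int>"
      using d1i kz by auto
    hence "2 * c 1 \<in> \<int>" "2 * c 0 \<in> \<int>" "2 * c 3 \<in> \<int>" "2 * c 2 \<in> \<int>"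
      unfolding c by (simp_all add: ofvk kk B4_def)
    thus ?thesis using that by (auto simp: less_Suc_eq numeral_eq_Suc)
  qed
  define a where "a = (\<lambda>i. \<lfloor>2 * c i\<rfloor>)"
  have ca: "c i = of_int (a i) / 2" if "i < 4" for i
    using int2[OF that] unfolding a_def by simp
  have d1a: "d1 = lc 4 (\<lambda>i. of_int (a i) / 2) k" unfolding c by (rule lc_cong) (simp add: ca)
  have na: "\<not> (\<forall>i<4. even (a i))"
  proof
    assume ev: "\<forall>i<4. even (a i)"
    have "d1 = ofv (lc 4 (\<lambda>i. a i div 2) k)" unfolding d1a ofv_lc
      by (rule lc_cong) (use ev in \<open>auto simp: of_int_div_eq[symmetric]\<close>) 
    moreover have "lc 4 (\<lambda>i. a i div 2) k \<in> zspan 4 k" unfolding zspan_lc by blast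
    ultimately have "d1 \<in> ofv ` zspan 4 k" by (rule image_eqI)
    thus False using d1n by contradiction
  qed
  have d1d1: "bil d1 d1 = of_int (a 0 * a 1 + a 2 * a 3)"
    unfolding d1a kk by (rule B4_half)
  have "(\<lambda>t. d1 t + d2 t) \<in> ofv ` Lam"
  proof -
    have ex: "\<exists>n y z. (\<lambda>t. d1 t + d2 t) = (\<lambda>t. of_int n * (d1 t + d2 t) + of_int (y t) + of_int (z t)) \<and> y \<in> zspan 4 k \<and> z \<in> zspan 8 e"
      by (rule exI[of _ 1], rule exI[of _ "\<lambda>t. 0"], rule exI[of _ "\<lambda>t. 0"]) (simp add: zero_zspan)
    show ?thesis unfolding LE mem_Collect_eq by (rule ex)
  qed
  then obtain D where D': "(\<lambda>t. d1 t + d2 t) = ofv D" "D \<in> Lam" by (rule imageE)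
  have D: "D \<in> Lam" "ofv D = (\<lambda>t. d1 t + d2 t)" using D' by simp_all
  define x where "x = (\<lambda>t. 2 * D t - lc 4 a k t)"
  have xL: "x \<in> Lam" using D(1) lc_Lam[OF B(1), where c=a] unfolding x_def Lam_def by simp
  have two_d1: "(\<lambda>t. 2 * d1 t) = lc 4 (\<lambda>i. of_int (a i)) k"
    unfolding d1a lc_scale by (rule lc_cong) simp
  have ofvx: "ofv x = (\<lambda>t. 2 * d2 t)"
  proof -
    have "ofv x = (\<lambda>t. 2 * ofv D t - ofv (lc 4 a k) t)" unfolding x_def ofv_def by simp
    also have "\<dots> = (\<lambda>t. 2 * (d1 t + d2 t) - 2 * d1 t)"
      unfolding D(2) ofv_lc two_d1[symmetric] ..
    finally show ?thesis by (simp add: algebra_simps)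
  qed
  have "x \<in> orth_compl (zspan 4 k)"
    unfolding orth_compl_def
  proof (intro CollectI conjI ballI xL)
    fix y assume "y \<in> zspan 4 k"
    then obtain cy where cy: "y = lc 4 cy k" unfolding zspan_lc by blast
    have "(of_int (bil x y) :: rat) = bil (ofv x) (ofv y)" unfolding ofv_def bil_of_int ..
    also have "\<dots> = 2 * bil d2 (lc 4 (\<lambda>i. of_int (cy i)) k)"
      unfolding ofvx cy ofv_lc bil_scale_left ..
    also have "\<dots> = 0" unfolding b using bil_ke[OF B(5)] by simp
    finally show "bil x y = 0" by simp
  qed
  hence "x \<in> zspan 8 e" using orth by simp
  then obtain m where m: "x = lc 8 m e" unfolding zspan_lc by blast
  have d2m: "d2 = lc 8 (\<lambda>i. of_int (m i) / 2) e"
  proof -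
    have "d2 = (\<lambda>t. (1/2) * ofv x t)" unfolding ofvx by simp
    also have "\<dots> = lc 8 (\<lambda>i. of_int (m i) / 2) e" unfolding m ofv_lc lc_scale by simp
    finally show ?thesis .
  qed
  have nm: "\<not> (\<forall>i<8. even (m i))"
  proof
    assume ev: "\<forall>i<8. even (m i)"
    have "d2 = ofv (lc 8 (\<lambda>i. m i div 2) e)" unfolding d2m ofv_lc
      by (rule lc_cong) (use ev in \<open>auto simp: of_int_div_eq[symmetric]\<close>)
    moreover have "lc 8 (\<lambda>i. m i div 2) e \<in> zspan 8 e" unfolding zspan_lc by blast
    ultimately have "d2 \<in> ofv ` zspan 8 e" by (rule image_eqI)
    thus False using d2n by contradiction
  qed
  have "(of_int (bil D D) :: rat) = bil (\<lambda>t. d1 t + d2 t) (\<lambda>t. d1 t + d2 t)"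
    unfolding D(2)[symmetric] ofv_def bil_of_int ..
  also have "\<dots> = bil d1 d1 + bil d1 d2 + bil d2 d1 + bil d2 d2"
    by (simp add: bil_add_left bil_add_right)
  also have "\<dots> = of_int (a 0 * a 1 + a 2 * a 3) - of_int (QE m)"
    unfolding d1d1 unfolding d2m d1a bil_ke[OF B(5)] bil_ee[OF B(4)] QE_half by simp
  finally have "bil D D = a 0 * a 1 + a 2 * a 3 - QE m"
    by (metis of_int_diff of_int_eq_iff)
  hence ev: "even (a 0 * a 1 + a 2 * a 3 - QE m)" using Lam_even[of D] by simp
  show ?thesis by (rule that[OF d1a d2m na nm ev d1d1])
qed

lemma ofv_lc_pt: "(of_int (lc n c b t) :: 'a::ring_1) = lc n (\<lambda>i. of_int (c i)) b t"
  unfolding lc_def by simp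

lemma of_rat_lc_pt: "(of_rat (lc n c b t) :: 'a::field_char_0) = lc n (\<lambda>i. of_rat (c i)) b t"
  unfolding lc_def by (simp add: of_rat_sum of_rat_mult)

lemma setup_LE:
  assumes S: "patching_setup k e d1 d2"
  shows "ofv ` Lam = {(\<lambda>t. of_int n * (d1 t + d2 t) + of_int (y t) + of_int (z t)) | n y z.
                   y \<in> zspan 4 k \<and> z \<in> zspan 8 e}"
  using S unfolding patching_setup_def by auto

lemma ofv_complex: "(ofv d :: nat \<Rightarrow> complex) = (\<lambda>t. of_rat ((ofv d :: nat \<Rightarrow> rat) t))"
  unfolding ofv_def by simp

lemma even_neg: "(P::int) < 0 \<Longrightarrow> even P \<Longrightarrow> P \<le> -2" by presburger

lemma B4_neg: "B4 t (\<lambda>i. - t i) = - B4 t t"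
  by (simp add: B4_def)

lemma part_even:
  assumes S: "patching_setup k e d1 d2" and ev: "even_type d1"
    and wH: "w \<in> Hyp_union" and wC: "w \<in> connected_component_set Omega_cone w0" and wK: "w \<in> Omega_Kpart k"
  shows False
proof -
  note B = setup_basic[OF S]
  note LE = setup_LE[OF S]
  obtain a m :: "nat \<Rightarrow> int" where d1a: "d1 = lc 4 (\<lambda>i. of_int (a i) / 2) k"
    and d2m: "d2 = lc 8 (\<lambda>i. of_int (m i) / 2) e" and na: "\<not> (\<forall>i<4. even (a i))"
    and nm: "\<not> (\<forall>i<8. even (m i))" and evam: "even (a 0 * a 1 + a 2 * a 3 - QE m)"
    and d1d1: "bil d1 d1 = of_int (a 0 * a 1 + a 2 * a 3)"
    by (rule setup_facts[OF S])
  have evA: "even (a 0 * a 1 + a 2 * a 3)"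
  proof -
    obtain j where "bil d1 d1 = of_int (2 * j)" using ev unfolding even_type_def by blast
    hence "a 0 * a 1 + a 2 * a 3 = 2 * j" unfolding d1d1 by (simp only: of_int_eq_iff)
    thus ?thesis by simp
  qed
  have wO: "w \<in> Omega_cone" using wC connected_component_in by blast
  obtain \<gamma> where wg: "w = lc 4 \<gamma> k" using wK unfolding Omega_Kpart_def span_coef_lc by blast
  obtain d where d: "d \<in> Lam" "bil d d = -2" "bil w (ofv d) = 0" using wH unfolding Hyp_union_def by blast
  have "(ofv d :: nat \<Rightarrow> rat) \<in> ofv ` Lam" by (rule imageI[OF d(1)])
  hence "\<exists>n y z. (ofv d :: nat \<Rightarrow> rat) = (\<lambda>t. of_int n * (d1 t + d2 t) + of_int (y t) + of_int (z t)) \<and> y \<in> zspan 4 k \<and> z \<in> zspan 8 e"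
    unfolding LE mem_Collect_eq .
  then obtain n y z where nyz: "(ofv d :: nat \<Rightarrow> rat) = (\<lambda>t. of_int n * (d1 t + d2 t) + of_int (y t) + of_int (z t))"
    and yz: "y \<in> zspan 4 k" "z \<in> zspan 8 e" by blast
  obtain yc where yc: "y = lc 4 yc k" using yz(1) unfolding zspan_lc by blast
  obtain zc where zc: "z = lc 8 zc e" using yz(2) unfolding zspan_lc by blast
  define ut where "ut = (\<lambda>i. of_int n * (of_int (a i) / 2) + of_int (yc i) :: rat)"
  define vt where "vt = (\<lambda>i. of_int n * (of_int (m i) / 2) + of_int (zc i) :: rat)"
  have dq: "(ofv d :: nat \<Rightarrow> rat) = (\<lambda>t. lc 4 ut k t + lc 8 vt e t)"
    unfolding nyz d1a d2m yc zc ofv_lc_pt lc_comb ut_def vt_def ..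
  have dd: "B4 ut ut - 4 * QE vt = -2"
  proof -
    have "(of_int (bil d d) :: rat) = bil (ofv d) (ofv d)" unfolding ofv_def bil_of_int ..
    also have "\<dots> = bil (lc 4 ut k) (lc 4 ut k) + bil (lc 4 ut k) (lc 8 vt e) + bil (lc 8 vt e) (lc 4 ut k) + bil (lc 8 vt e) (lc 8 vt e)"
      unfolding dq by (simp add: bil_add_left bil_add_right)
    also have "\<dots> = B4 ut ut - 4 * QE vt"
      unfolding bil_kk[OF B(2)] bil_ke[OF B(5)] bil_ee[OF B(4)] by simp
    finally show ?thesis using d(2) by simp
  qed
  have dC: "(ofv d :: nat \<Rightarrow> complex) = (\<lambda>t. lc 4 (\<lambda>i. of_rat (ut i)) k t + lc 8 (\<lambda>i. of_rat (vt i)) e t)"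
    unfolding ofv_complex dq of_rat_add of_rat_lc_pt ..
  have bw: "B4 \<gamma> (\<lambda>i. of_rat (ut i)) = 0"
  proof -
    have "bil w (ofv d) = bil (lc 4 \<gamma> k) (lc 4 (\<lambda>i. of_rat (ut i)) k) + bil (lc 4 \<gamma> k) (lc 8 (\<lambda>i. of_rat (vt i)) e)"
      unfolding wg dC by (rule bil_add_right)
    also have "\<dots> = B4 \<gamma> (\<lambda>i. of_rat (ut i))" unfolding bil_kk[OF B(2)] bil_ke[OF B(5)] by simp
    finally show ?thesis using d(3) by simp
  qed
  have Om: "bil w w = 0" "0 < Re (bil w (\<lambda>t. cnj (w t)))" using wO unfolding Omega_cone_def by auto
  have gg: "B4 \<gamma> \<gamma> = 0" using Om(1) unfolding wg bil_kk[OF B(2)] .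
  have gc: "0 < Re (B4 \<gamma> (\<lambda>i. cnj (\<gamma> i)))" using Om(2) unfolding wg cnj_lc bil_kk[OF B(2)] .
  define x where "x = (\<lambda>i. Re (\<gamma> i))"
  define y' where "y' = (\<lambda>i. Im (\<gamma> i))"
  define u where "u = (\<lambda>i. of_rat (ut i) :: real)"
  have r1: "B4 x x - B4 y' y' = 0" "B4 x y' + B4 y' x = 0"
    using gg unfolding B4_reim[of \<gamma> \<gamma>] by (simp_all add: complex_eq_iff x_def y'_def)
  have r2: "0 < B4 x x + B4 y' y'"
  proof -
    have "Re (B4 \<gamma> (\<lambda>i. cnj (\<gamma> i))) = B4 x x - B4 y' (\<lambda>i. - y' i)"
      unfolding B4_reim[of \<gamma>] by (simp add: x_def y'_def)
    thus ?thesis using gc B4_neg[of y'] by simp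
  qed
  have r3: "B4 x u = 0" "B4 y' u = 0"
  proof -
    have re: "(\<lambda>i. Re (of_rat (ut i) :: complex)) = u" "(\<lambda>i. Im (of_rat (ut i) :: complex)) = (\<lambda>i. 0)"
      unfolding u_def of_rat_complex by simp_all
    have z: "B4 v (\<lambda>i. 0::real) = 0" for v by (simp add: B4_def)
    have "B4 \<gamma> (\<lambda>i. of_rat (ut i)) = complex_of_real (B4 x u) + \<i> * complex_of_real (B4 y' u)"
      unfolding B4_reim[of \<gamma>] re z by (simp add: x_def y'_def)
    thus "B4 x u = 0" "B4 y' u = 0" using bw by (simp_all add: complex_eq_iff)
  qed
  have sgn: "B4 ut ut < 0 \<or> (ut 0 = 0 \<and> ut 1 = 0 \<and> ut 2 = 0 \<and> ut 3 = 0)"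
  proof -
    have xx: "B4 x x > 0" using r1 r2 by simp
    have "B4 u u < 0 \<or> (u 0 = 0 \<and> u 1 = 0 \<and> u 2 = 0 \<and> u 3 = 0)"
    proof -
      have yy: "B4 y' y' = B4 x x" using r1(1) by simp
      have xy: "B4 x y' = 0" using r1(2) B4_sym[of y' x] by simp
      show ?thesis by (rule Ksign[OF xx yy xy r3(1) r3(2)])
    qed
    moreover have "B4 u u = of_rat (B4 ut ut)" unfolding u_def by (rule B4_of_rat)
    ultimately show ?thesis unfolding u_def by simp
  qed
  show False
  proof (cases "even n")
    case True
    then obtain n' where n': "n = 2 * n'" by (rule evenE)
    define U where "U = (\<lambda>i. n' * a i + yc i)"
    define W where "W = (\<lambda>i. n' * m i + zc i)"
    have ut': "ut = (\<lambda>i. of_int (U i))" unfolding ut_def U_def n' by (rule ext) simp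
    have vt': "vt = (\<lambda>i. of_int (W i))" unfolding vt_def W_def n' by (rule ext) simp
    have "B4 ut ut = of_int (B4 U U)" unfolding ut' by (simp add: B4_def)
    moreover have "QE vt = of_int (QE W)" unfolding vt' by (rule QE_of_int)
    ultimately have "(of_int (B4 U U - 4 * QE W) :: rat) = of_int (-2)" using dd by simp
    hence "B4 U U - 4 * QE W = -2" by (simp only: of_int_eq_iff)
    hence "4 * (U 0 * U 1 + U 2 * U 3 - QE W) = -2" by (simp add: B4_def algebra_simps)
    hence "(4::int) dvd -2" by (metis dvd_triv_left)
    thus False by simp
  next
    case False
    then obtain n' where n': "n = 2 * n' + 1" using oddE by blast
    define q where "q = (\<lambda>i. a i + 2 * (n' * a i + yc i))"
    have ut': "ut = (\<lambda>i. of_int (q i) / 2)" unfolding ut_def q_def n' by (rule ext) (simp add: field_simps)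
    have Pq: "B4 ut ut = of_int (q 0 * q 1 + q 2 * q 3)" unfolding ut' by (rule B4_half)
    have "q 0 * q 1 + q 2 * q 3 = a 0 * a 1 + a 2 * a 3 + 2 * (a 0 * (n' * a 1 + yc 1) + (n' * a 0 + yc 0) * a 1
        + 2 * (n' * a 0 + yc 0) * (n' * a 1 + yc 1) + a 2 * (n' * a 3 + yc 3) + (n' * a 2 + yc 2) * a 3
        + 2 * (n' * a 2 + yc 2) * (n' * a 3 + yc 3))"
      unfolding q_def by (simp add: algebra_simps)
    hence evq: "even (q 0 * q 1 + q 2 * q 3)" using evA by simp
    obtain i where i: "i < 4" "odd (a i)" using na by blast
    have "odd (q i)" using i(2) unfolding q_def by simp
    hence "q i \<noteq> 0" by auto
    hence "ut i \<noteq> 0" unfolding ut' by simp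
    hence "\<not> (ut 0 = 0 \<and> ut 1 = 0 \<and> ut 2 = 0 \<and> ut 3 = 0)" using i(1)
      by (auto simp: less_Suc_eq numeral_eq_Suc)
    hence "B4 ut ut < 0" using sgn by blast
    hence "(of_int (q 0 * q 1 + q 2 * q 3) :: rat) < of_int 0" unfolding Pq by (simp only: of_int_0)
    hence "q 0 * q 1 + q 2 * q 3 < 0" by (simp only: of_int_less_iff)
    hence "q 0 * q 1 + q 2 * q 3 \<le> -2" using evq even_neg by blast
    hence "(of_int (q 0 * q 1 + q 2 * q 3) :: rat) \<le> of_int (-2)" by (simp only: of_int_le_iff)
    hence "B4 ut ut \<le> -2" unfolding Pq by simp
    hence "QE vt \<le> 0" using dd by simp
    hence vz: "vt 0 = 0 \<and> vt 1 = 0 \<and> vt 2 = 0 \<and> vt 3 = 0 \<and> vt 4 = 0 \<and> vt 5 = 0 \<and> vt 6 = 0 \<and> vt 7 = 0"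
      by (rule QE_zero)
    have "even (m j)" if j: "j < 8" for j
    proof -
      have "j = 0 \<or> j = 1 \<or> j = 2 \<or> j = 3 \<or> j = 4 \<or> j = 5 \<or> j = 6 \<or> j = 7" using j by auto
      hence "vt j = 0" using vz by auto
      hence "(of_int ((2 * n' + 1) * m j + 2 * zc j) :: rat) = of_int 0" unfolding vt_def n' by (simp add: field_simps)
      hence "(2 * n' + 1) * m j + 2 * zc j = 0" by (simp only: of_int_eq_iff)
      hence "(2 * n' + 1) * m j = - 2 * zc j" by simp
      hence "even ((2 * n' + 1) * m j)" by (metis dvd_triv_left mult_minus_left dvd_minus_iff)
      thus ?thesis by simp
    qed
    thus False using nm by blast
  qed
qed

lemma part_odd:
  assumes S: "patching_setup k e d1 d2" and od: "odd_type d1" and w0: "w0 \<in> Omega_cone"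
  shows "Hyp_union \<inter> (connected_component_set Omega_cone w0 \<inter> Omega_Kpart k) \<noteq> {}"
proof -
  note B = setup_basic[OF S]
  note LE = setup_LE[OF S]
  obtain a m :: "nat \<Rightarrow> int" where d1a: "d1 = lc 4 (\<lambda>i. of_int (a i) / 2) k"
    and d2m: "d2 = lc 8 (\<lambda>i. of_int (m i) / 2) e" and na: "\<not> (\<forall>i<4. even (a i))"
    and nm: "\<not> (\<forall>i<8. even (m i))" and evam: "even (a 0 * a 1 + a 2 * a 3 - QE m)"
    and d1d1: "bil d1 d1 = of_int (a 0 * a 1 + a 2 * a 3)"
    by (rule setup_facts[OF S])
  have oA: "odd (a 0 * a 1 + a 2 * a 3)"
  proof -
    obtain j where "bil d1 d1 = of_int (2 * j + 1)" using od unfolding odd_type_def by blast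
    hence "a 0 * a 1 + a 2 * a 3 = 2 * j + 1" unfolding d1d1 by (simp only: of_int_eq_iff)
    thus ?thesis by simp
  qed
  have oQ: "odd (QE m)" using oA evam by auto
  obtain r where r: "QE r = 1" "\<forall>i<8. even (r i - m i)" using E8_root_exists[OF oQ] by blast
  obtain A s t :: "nat \<Rightarrow> int" where K: "\<forall>i<4. even (A i - a i)" "A 0 * A 1 + A 2 * A 3 = -1"
    "B4 s s = 4" "B4 t t = 4" "B4 s t = 0" "B4 s A = 0" "B4 t A = 0"
    using Kchoice[OF oA] by blast
  define U where "U = (lc 4 (\<lambda>i. of_int (A i) / 2) k :: nat \<Rightarrow> rat)"
  define V where "V = (lc 8 (\<lambda>i. of_int (r i) / 2) e :: nat \<Rightarrow> rat)"
  define y where "y = lc 4 (\<lambda>i. (A i - a i) div 2) k"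
  define z where "z = lc 8 (\<lambda>i. (r i - m i) div 2) e"
  have yz: "y \<in> zspan 4 k" "z \<in> zspan 8 e" unfolding y_def z_def zspan_lc by blast+
  have UV: "(\<lambda>t. U t + V t) = (\<lambda>t. of_int 1 * (d1 t + d2 t) + of_int (y t) + of_int (z t))"
  proof -
    have "(\<lambda>t. of_int 1 * (d1 t + d2 t) + of_int (y t) + of_int (z t))
        = (\<lambda>t. lc 4 (\<lambda>i. of_int 1 * (of_int (a i) / 2) + of_int ((A i - a i) div 2)) k t
             + lc 8 (\<lambda>i. of_int 1 * (of_int (m i) / 2) + of_int ((r i - m i) div 2)) e t)"
      unfolding d1a d2m y_def z_def ofv_lc_pt lc_comb ..
    also have "lc 4 (\<lambda>i. of_int 1 * (of_int (a i) / 2) + of_int ((A i - a i) div 2)) k = U"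
      unfolding U_def
    proof (rule lc_cong)
      fix i :: nat assume "i < 4"
      hence "even (A i - a i)" using K(1) by blast
      thus "of_int 1 * (of_int (a i) / 2) + (of_int ((A i - a i) div 2) :: rat) = of_int (A i) / 2"
        by (simp add: of_int_div_eq field_simps)
    qed
    also have "lc 8 (\<lambda>i. of_int 1 * (of_int (m i) / 2) + of_int ((r i - m i) div 2)) e = V"
      unfolding V_def
    proof (rule lc_cong)
      fix i :: nat assume "i < 8"
      hence "even (r i - m i)" using r(2) by blast
      thus "of_int 1 * (of_int (m i) / 2) + (of_int ((r i - m i) div 2) :: rat) = of_int (r i) / 2"
        by (simp add: of_int_div_eq field_simps)
    qed
    finally show ?thesis ..
  qed
  have "\<exists>n y z. (\<lambda>t. U t + V t) = (\<lambda>t. of_int n * (d1 t + d2 t) + of_int (y t) + of_int (z t)) \<and> y \<in> zspan 4 k \<and> z \<in> zspan 8 e"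
    using UV yz by blast
  hence "(\<lambda>t. U t + V t) \<in> ofv ` Lam" unfolding LE mem_Collect_eq .
  then obtain d where d': "(\<lambda>t. U t + V t) = ofv d" "d \<in> Lam" by (rule imageE)
  have dq: "(ofv d :: nat \<Rightarrow> rat) = (\<lambda>t. U t + V t)" using d'(1) by simp
  have dd: "bil d d = -2"
  proof -
    have "(of_int (bil d d) :: rat) = bil (ofv d) (ofv d)" unfolding ofv_def bil_of_int ..
    also have "\<dots> = bil U U + bil U V + bil V U + bil V V"
      unfolding dq by (simp add: bil_add_left bil_add_right)
    also have "\<dots> = of_int (A 0 * A 1 + A 2 * A 3) - of_int (QE r)"
      unfolding U_def V_def bil_kk[OF B(2)] bil_ke[OF B(5)] bil_ee[OF B(4)] B4_half QE_half by simp
    also have "\<dots> = of_int (-2)" using K(2) r(1) by simp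
    finally show ?thesis by (simp only: of_int_eq_iff)
  qed
  define \<gamma> where "\<gamma> = (\<lambda>i. of_int (s i) + \<i> * of_int (t i) :: complex)"
  define \<omega> where "\<omega> = lc 4 \<gamma> k"
  have dC: "(ofv d :: nat \<Rightarrow> complex) = (\<lambda>t. lc 4 (\<lambda>i. of_int (A i) / 2) k t + lc 8 (\<lambda>i. of_int (r i) / 2) e t)"
  proof -
    have "(ofv d :: nat \<Rightarrow> complex) = (\<lambda>t. lc 4 (\<lambda>i. of_rat (of_int (A i) / 2)) k t + lc 8 (\<lambda>i. of_rat (of_int (r i) / 2)) e t)"
      unfolding ofv_complex dq U_def V_def of_rat_add of_rat_lc_pt ..
    also have "\<dots> = (\<lambda>t. lc 4 (\<lambda>i. of_int (A i) / 2) k t + lc 8 (\<lambda>i. of_int (r i) / 2) e t)"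
      by (simp add: of_rat_divide)
    finally show ?thesis .
  qed
  have bwd: "bil \<omega> (ofv d) = 0"
  proof -
    have "bil \<omega> (ofv d) = bil (lc 4 \<gamma> k) (lc 4 (\<lambda>i. of_int (A i) / 2) k) + bil (lc 4 \<gamma> k) (lc 8 (\<lambda>i. of_int (r i) / 2) e)"
      unfolding \<omega>_def dC by (rule bil_add_right)
    also have "\<dots> = B4 \<gamma> (\<lambda>i. of_int (A i) / 2)" unfolding bil_kk[OF B(2)] bil_ke[OF B(5)] by simp
    also have "\<dots> = 0" unfolding \<gamma>_def B4_cx_half K(6) K(7) by simp
    finally show ?thesis .
  qed
  have cg: "(\<lambda>i. cnj (\<gamma> i)) = (\<lambda>i. of_int (s i) + \<i> * of_int (- t i))" unfolding \<gamma>_def by (rule ext) simp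
  have \<omega>O: "\<omega> \<in> Omega_cone"
  proof -
    have z: "\<forall>i\<ge>12. \<omega> i = 0" unfolding \<omega>_def using lc_Lam[OF B(1)] by blast
    have "bil \<omega> \<omega> = B4 \<gamma> \<gamma>" unfolding \<omega>_def by (rule bil_kk[OF B(2)])
    also have "\<dots> = 0" unfolding \<gamma>_def B4_cx using K(3,4,5) B4_sym[of t s] by simp
    finally have 1: "bil \<omega> \<omega> = 0" .
    have "bil \<omega> (\<lambda>i. cnj (\<omega> i)) = B4 \<gamma> (\<lambda>i. cnj (\<gamma> i))" unfolding \<omega>_def cnj_lc by (rule bil_kk[OF B(2)])
    also have "\<dots> = of_int (B4 s s - B4 t (\<lambda>i. - t i)) + \<i> * of_int (B4 s (\<lambda>i. - t i) + B4 t s)"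
      unfolding cg unfolding \<gamma>_def by (rule B4_cx)
    finally have "Re (bil \<omega> (\<lambda>i. cnj (\<omega> i))) = 8" using K(3,4) B4_neg[of t] by simp
    thus ?thesis unfolding Omega_cone_def using z 1 by simp
  qed
  have \<omega>H: "\<omega> \<in> Hyp_union" unfolding Hyp_union_def using d'(2) dd bwd by blast
  have \<omega>K: "\<omega> \<in> Omega_Kpart k" unfolding Omega_Kpart_def span_coef_lc \<omega>_def by blast
  have c\<omega>K: "(\<lambda>i. cnj (\<omega> i)) \<in> Omega_Kpart k" unfolding Omega_Kpart_def span_coef_lc \<omega>_def cnj_lc by blast
  have c\<omega>H: "(\<lambda>i. cnj (\<omega> i)) \<in> Hyp_union"
  proof -
    have od: "(\<lambda>t. cnj ((ofv d :: nat \<Rightarrow> complex) t)) = ofv d" unfolding ofv_def by simp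
    have "bil (\<lambda>i. cnj (\<omega> i)) (ofv d) = cnj (bil \<omega> (ofv d))"
      by (subst od[symmetric]) (rule bil_cnj)
    hence "bil (\<lambda>i. cnj (\<omega> i)) (ofv d) = 0" using bwd by simp
    thus ?thesis unfolding Hyp_union_def using d'(2) dd by blast
  qed
  from conn_or[OF w0 \<omega>O] show ?thesis
  proof
    assume "connected_component Omega_cone w0 \<omega>"
    hence "\<omega> \<in> Hyp_union \<inter> (connected_component_set Omega_cone w0 \<inter> Omega_Kpart k)" using \<omega>H \<omega>K by simp
    thus ?thesis by blast
  next
    assume "connected_component Omega_cone w0 (\<lambda>i. cnj (\<omega> i))"
    hence "(\<lambda>i. cnj (\<omega> i)) \<in> Hyp_union \<inter> (connected_component_set Omega_cone w0 \<inter> Omega_Kpart k)" using c\<omega>H c\<omega>K by simp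
    thus ?thesis by blast
  qed
qed

theorem proposition3p13:
  fixes k e :: "nat \<Rightarrow> nat \<Rightarrow> int" and d1 d2 :: "nat \<Rightarrow> rat" and w0 :: "nat \<Rightarrow> complex"
  assumes "patching_setup k e d1 d2"
    and "w0 \<in> Omega_cone"
  shows "(odd_type d1 \<longrightarrow>
            Hyp_union \<inter> (connected_component_set Omega_cone w0 \<inter> Omega_Kpart k) \<noteq> {}) \<and>
         (even_type d1 \<longrightarrow>
            Hyp_union \<inter> (connected_component_set Omega_cone w0 \<inter> Omega_Kpart k) = {})"
proof (intro conjI impI)
  assume "odd_type d1"
  thus "Hyp_union \<inter> (connected_component_set Omega_cone w0 \<inter> Omega_Kpart k) \<noteq> {}"
    by (rule part_odd[OF assms(1) _ assms(2)])
next
  assume ev: "even_type d1"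
  show "Hyp_union \<inter> (connected_component_set Omega_cone w0 \<inter> Omega_Kpart k) = {}"
  proof (rule equals0I)
    fix w assume "w \<in> Hyp_union \<inter> (connected_component_set Omega_cone w0 \<inter> Omega_Kpart k)"
    hence "w \<in> Hyp_union" "w \<in> connected_component_set Omega_cone w0" "w \<in> Omega_Kpart k" by auto
    thus False by (rule part_even[OF assms(1) ev])
  qed
qed

end
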